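(* Let $\Pi$ be an infinite atomless L\'evy measure on $(0,\infty)$ (of a driftless subordinator), with $\overline{\Pi}(x)=\Pi((x,\infty))$ and $\overline{\Pi}^{\leftarrow}(y)=\inf\{x>0:\overline{\Pi}(x)\le y\}$. Suppose there exist deterministic $a_r>0$, $b_r\in\mathbb{R}$ and $\gamma<0$ such that for every $x$ with $a_rx+b_r>0$ and $1-\gamma x>0$, $\lim_{r\to\infty}(r-\overline{\Pi}(a_rx+b_r))/\sqrt r=-\tfrac{2}{\gamma}\log(1-\gamma x)$. Put $b_r=\overline{\Pi}^{\leftarrow}(r)$. Then: (i) for every $p\ge1$, $\int_0^{b_r}u^p\,\Pi(\mathrm{d}u)\sim\frac{2}{p|\gamma|}b_r^p\sqrt r$ as $r\to\infty$; in particular $\sigma^2(b_r)\sim\frac1{|\gamma|}b_r^2\sqrt r$; (ii) $\overline{\Pi}$ is slowly varying at $0$, $\sigma^2$ is regularly varying at $0$ with index $2$, and $G(x)=e^{-\sqrt{\overline{\Pi}(x)}}$, $x>0$, is regularly varying at $0$ with index $1/|\gamma|$.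
   Context: $\sigma^2(t)=\int_0^t x^2\,\Pi(\mathrm{d}x)$, $t>0$. *)

theory Defs
  imports "HOL-Analysis.Analysis" "HOL-Library.Landau_Symbols"
begin

definition subordinator_levy_measure :: "real measure \<Rightarrow> bool" where
  "subordinator_levy_measure M \<longleftrightarrow>
     sets M = sets borel \<and> emeasure M {..0} = 0 \<and>
     (\<integral>\<^sup>+ x. ennreal (min 1 x) \<partial>M) < \<infinity>"

definition infinite_measure :: "real measure \<Rightarrow> bool" where
  "infinite_measure M \<longleftrightarrow> emeasure M {0<..} = \<infinity>"

definition atomless :: "real measure \<Rightarrow> bool" where
  "atomless M \<longleftrightarrow> (\<forall>x. emeasure M {x} = 0)"

definition Pibar :: "real measure \<Rightarrow> real \<Rightarrow> real" where
  "Pibar M x = measure M {x<..}"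

definition Pibar_inv :: "real measure \<Rightarrow> real \<Rightarrow> real" where
  "Pibar_inv M y = Inf {x. x > 0 \<and> Pibar M x \<le> y}"

definition sigma2 :: "real measure \<Rightarrow> real \<Rightarrow> real" where
  "sigma2 M t = (LINT x:{0..t}|M. x ^ 2)"

definition regvar_at_0 :: "(real \<Rightarrow> real) \<Rightarrow> real \<Rightarrow> bool" where
  "regvar_at_0 f \<rho> \<longleftrightarrow> (\<forall>\<^sub>F x in at_right 0. f x > 0) \<and>
     (\<forall>l>0. ((\<lambda>x. f (l * x) / f x) \<longlongrightarrow> l powr \<rho>) (at_right 0))"

definition slowvar_at_0 :: "(real \<Rightarrow> real) \<Rightarrow> bool" where
  "slowvar_at_0 f \<longleftrightarrow> regvar_at_0 f 0"

end

theory Submission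
  imports Defs
begin


lemma ln_up: fixes t h :: real assumes "t > 0" "h \<ge> 0" shows "ln (t + h) \<le> ln t + h / t"
proof -
  have "t + h > 0" using assms by linarith
  then have "ln (t + h) = ln t + ln ((t + h) / t)" using assms by (simp add: ln_div)
  also have "ln ((t + h) / t) \<le> (t + h) / t - 1" using assms by (intro ln_le_minus_one) (auto intro: divide_pos_pos)
  also have "(t + h) / t - 1 = h / t" using assms by (simp add: field_simps)
  finally show ?thesis by simp
qed

lemma FW:
  fixes L :: "real \<Rightarrow> real" and \<beta> e c z :: "'a \<Rightarrow> real"
  assumes anti: "\<And>u v. 0 < u \<Longrightarrow> u \<le> v \<Longrightarrow> L v \<le> L u"
    and par: "\<And>\<sigma>. \<sigma> > 0 \<Longrightarrow> (\<forall>\<^sub>F i in F. \<beta> i * \<sigma> + e i > 0) \<and>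
                 ((\<lambda>i. L (\<beta> i * \<sigma> + e i) - c i) \<longlongrightarrow> - ln \<sigma>) F"
    and bpos: "\<forall>\<^sub>F i in F. \<beta> i > 0"
    and zl: "((\<lambda>i. (z i - e i) / \<beta> i) \<longlongrightarrow> \<tau>) F" and tau: "\<tau> > 0"
  shows "((\<lambda>i. L (z i) - c i) \<longlongrightarrow> - ln \<tau>) F"
proof (rule tendstoI)
  fix \<epsilon> :: real assume eps: "\<epsilon> > 0"
  define \<eta> where "\<eta> = \<tau> * min (1/2) (\<epsilon>/8)"
  have eta: "0 < \<eta>" "\<eta> \<le> \<tau>/2" "\<eta> \<le> \<tau> * (\<epsilon>/8)" using tau eps by (auto simp: \<eta>_def)
  have l1: "ln (\<tau> + \<eta>) \<le> ln \<tau> + \<epsilon>/4"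
  proof -
    have "ln (\<tau> + \<eta>) \<le> ln \<tau> + \<eta> / \<tau>" using ln_up[of \<tau> \<eta>] tau eta by simp
    also have "\<eta> / \<tau> \<le> \<epsilon>/8" using eta tau by (simp add: divide_le_eq mult.commute)
    finally show ?thesis using eps by simp
  qed
  have l2: "ln \<tau> \<le> ln (\<tau> - \<eta>) + \<epsilon>/4"
  proof -
    have "ln ((\<tau> - \<eta>) + \<eta>) \<le> ln (\<tau> - \<eta>) + \<eta> / (\<tau> - \<eta>)" using ln_up[of "\<tau> - \<eta>" \<eta>] tau eta by simp
    also have "\<eta> / (\<tau> - \<eta>) \<le> 2 * \<eta> / \<tau>" using eta tau by (simp add: field_simps)
    also have "2 * \<eta> / \<tau> \<le> \<epsilon>/4" using eta tau by (simp add: divide_le_eq mult.commute)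
    finally show ?thesis by simp
  qed
  have tm: "\<tau> - \<eta> > 0" using eta tau by simp
  have E1: "\<forall>\<^sub>F i in F. dist ((z i - e i) / \<beta> i) \<tau> < \<eta>" using tendstoD[OF zl eta(1)] .
  have E3: "\<forall>\<^sub>F i in F. \<beta> i * (\<tau> - \<eta>) + e i > 0" using par[OF tm] by blast
  have E3': "\<forall>\<^sub>F i in F. dist (L (\<beta> i * (\<tau> - \<eta>) + e i) - c i) (- ln (\<tau> - \<eta>)) < \<epsilon>/2"
    using tendstoD[OF conjunct2[OF par[OF tm]], of "\<epsilon>/2"] eps by simp
  have tp: "\<tau> + \<eta> > 0" using eta tau by simp
  have E4': "\<forall>\<^sub>F i in F. dist (L (\<beta> i * (\<tau> + \<eta>) + e i) - c i) (- ln (\<tau> + \<eta>)) < \<epsilon>/2"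
    using tendstoD[OF conjunct2[OF par[OF tp]], of "\<epsilon>/2"] eps by simp
  show "\<forall>\<^sub>F i in F. dist (L (z i) - c i) (- ln \<tau>) < \<epsilon>"
    using E1 E3 E3' E4' bpos
  proof eventually_elim
    case (elim i)
    have q: "\<bar>(z i - e i) / \<beta> i - \<tau>\<bar> < \<eta>" using elim(1) by (simp add: dist_real_def)
    have b: "\<beta> i > 0" using elim(5) .
    have "(z i - e i) / \<beta> i > \<tau> - \<eta>" "(z i - e i) / \<beta> i < \<tau> + \<eta>" using q by auto
    then have z1: "\<beta> i * (\<tau> - \<eta>) + e i < z i" and z2: "z i < \<beta> i * (\<tau> + \<eta>) + e i"
      using b by (auto simp: field_simps)
    have "L (z i) \<le> L (\<beta> i * (\<tau> - \<eta>) + e i)" using anti[OF elim(2)] z1 by simp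
    moreover have "L (\<beta> i * (\<tau> + \<eta>) + e i) \<le> L (z i)" using anti[of "z i"] z1 z2 elim(2) by simp
    moreover have "L (\<beta> i * (\<tau> - \<eta>) + e i) - c i + ln (\<tau> - \<eta>) < \<epsilon>/2"
      using elim(3) unfolding dist_real_def abs_less_iff by simp
    moreover have "- (L (\<beta> i * (\<tau> + \<eta>) + e i) - c i + ln (\<tau> + \<eta>)) < \<epsilon>/2"
      using elim(4) unfolding dist_real_def abs_less_iff by simp
    ultimately show ?case using l1 l2 eps unfolding dist_real_def abs_less_iff by linarith
  qed
qed

lemma INV:
  fixes L :: "real \<Rightarrow> real" and \<beta> e c z :: "'a \<Rightarrow> real"
  assumes anti: "\<And>u v. 0 < u \<Longrightarrow> u \<le> v \<Longrightarrow> L v \<le> L u"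
    and par: "\<And>\<sigma>. \<sigma> > 0 \<Longrightarrow> (\<forall>\<^sub>F i in F. \<beta> i * \<sigma> + e i > 0) \<and>
                 ((\<lambda>i. L (\<beta> i * \<sigma> + e i) - c i) \<longlongrightarrow> - ln \<sigma>) F"
    and bpos: "\<forall>\<^sub>F i in F. \<beta> i > 0"
    and Lz: "((\<lambda>i. L (z i) - c i) \<longlongrightarrow> - ln \<tau>) F" and tau: "\<tau> > 0"
    and zpos: "\<forall>\<^sub>F i in F. z i > 0"
  shows "((\<lambda>i. (z i - e i) / \<beta> i) \<longlongrightarrow> \<tau>) F"
proof (rule tendstoI)
  fix \<epsilon> :: real assume eps: "\<epsilon> > 0"
  define \<eta> where "\<eta> = min \<epsilon> (\<tau>/2)"
  have eta: "0 < \<eta>" "\<eta> \<le> \<tau>/2" "\<eta> \<le> \<epsilon>" using tau eps by (auto simp: \<eta>_def)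
  have tm: "\<tau> - \<eta> > 0" and tp: "\<tau> + \<eta> > 0" using eta tau by auto
  define \<delta>1 where "\<delta>1 = (ln (\<tau> + \<eta>) - ln \<tau>) / 2"
  define \<delta>2 where "\<delta>2 = (ln \<tau> - ln (\<tau> - \<eta>)) / 2"
  have d1e: "2 * \<delta>1 = ln (\<tau> + \<eta>) - ln \<tau>" "2 * \<delta>2 = ln \<tau> - ln (\<tau> - \<eta>)"
    by (simp_all add: \<delta>1_def \<delta>2_def)
  have d1: "\<delta>1 > 0" using tau eta by (simp add: \<delta>1_def)
  have d2: "\<delta>2 > 0" using tau eta tm by (simp add: \<delta>2_def)
  have E1: "\<forall>\<^sub>F i in F. dist (L (\<beta> i * (\<tau> + \<eta>) + e i) - c i) (- ln (\<tau> + \<eta>)) < \<delta>1"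
    using tendstoD[OF conjunct2[OF par[OF tp]] d1] .
  have E2: "\<forall>\<^sub>F i in F. dist (L (\<beta> i * (\<tau> - \<eta>) + e i) - c i) (- ln (\<tau> - \<eta>)) < \<delta>2"
    using tendstoD[OF conjunct2[OF par[OF tm]] d2] .
  have E3: "\<forall>\<^sub>F i in F. dist (L (z i) - c i) (- ln \<tau>) < min \<delta>1 \<delta>2"
    using d1 d2 by (intro tendstoD[OF Lz]) simp
  have E4: "\<forall>\<^sub>F i in F. \<beta> i * (\<tau> + \<eta>) + e i > 0" using par[OF tp] by blast
  show "\<forall>\<^sub>F i in F. dist ((z i - e i) / \<beta> i) \<tau> < \<epsilon>"
    using E1 E2 E3 E4 bpos zpos
  proof eventually_elim
    case (elim i)
    have m: "min \<delta>1 \<delta>2 \<le> \<delta>1" "min \<delta>1 \<delta>2 \<le> \<delta>2" by auto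
    have a1: "L (\<beta> i * (\<tau> + \<eta>) + e i) < L (z i)"
      using elim(1,3) m d1e unfolding dist_real_def abs_less_iff by linarith
    have a2: "L (z i) < L (\<beta> i * (\<tau> - \<eta>) + e i)"
      using elim(2,3) m d1e unfolding dist_real_def abs_less_iff by linarith
    have z2: "z i < \<beta> i * (\<tau> + \<eta>) + e i"
    proof (rule ccontr)
      assume "\<not> ?thesis"
      then have "L (z i) \<le> L (\<beta> i * (\<tau> + \<eta>) + e i)" using anti[OF elim(4)] by simp
      with a1 show False by simp
    qed
    have z1: "\<beta> i * (\<tau> - \<eta>) + e i < z i"
    proof (rule ccontr)
      assume "\<not> ?thesis"
      then have "L (\<beta> i * (\<tau> - \<eta>) + e i) \<le> L (z i)" using anti[OF elim(6)] by simp
      with a2 show False by simp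
    qed
    have b: "\<beta> i > 0" using elim(5) .
    have "(z i - e i) / \<beta> i < \<tau> + \<eta>" "(z i - e i) / \<beta> i > \<tau> - \<eta>"
      using z1 z2 b by (auto simp: field_simps)
    then show ?case using eta by (simp add: dist_real_def abs_less_iff)
  qed
qed

locale PS =
  fixes M :: "real measure" and a b :: "real \<Rightarrow> real" and \<gamma> :: real
  assumes levy: "subordinator_levy_measure M"
    and inf: "infinite_measure M"
    and atoml: "atomless M"
    and a_pos: "\<And>r. a r > 0"
    and \<gamma>_neg: "\<gamma> < 0"
    and conv: "\<And>x. 1 - \<gamma> * x > 0 \<Longrightarrow>
        (\<forall>\<^sub>F r in at_top. a r * x + b r > 0) \<and>
        ((\<lambda>r. (r - Pibar M (a r * x + b r)) / sqrt r)
           \<longlongrightarrow> - (2 / \<gamma>) * ln (1 - \<gamma> * x)) at_top"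
begin

abbreviation "P \<equiv> Pibar M"

lemma sets_M[measurable_cong]: "sets M = sets borel"
  using levy by (simp add: subordinator_levy_measure_def)

lemma space_M[simp]: "space M = UNIV"
  using sets_eq_imp_space_eq[OF sets_M] by simp

lemma meas_M[measurable]: "A \<in> sets borel \<Longrightarrow> A \<in> sets M"
  using sets_M by simp

lemma fin: assumes "x > 0" shows "emeasure M {x<..} < \<infinity>"
proof -
  have "(\<integral>\<^sup>+ u. ennreal (min 1 x) * indicator {x<..} u \<partial>M) \<le> (\<integral>\<^sup>+ u. ennreal (min 1 u) \<partial>M)"
    by (intro nn_integral_mono) (auto simp: indicator_def intro: ennreal_leI)
  also have "\<dots> < \<infinity>" using levy by (simp add: subordinator_levy_measure_def)
  finally have "ennreal (min 1 x) * emeasure M {x<..} < \<infinity>"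
    by (subst (asm) nn_integral_cmult_indicator) auto
  moreover have "ennreal (min 1 x) > 0" using assms by simp
  ultimately show ?thesis
    by (metis ennreal_mult_less_top infinity_ennreal_def not_gr_zero top.not_eq_extremum
        ennreal_zero_less_top ennreal_less_top ennreal_mult_eq_top_iff)
qed

lemma P_eq: "x > 0 \<Longrightarrow> ennreal (P x) = emeasure M {x<..}"
  using fin[of x] by (simp add: Pibar_def emeasure_eq_measure2 measure_def ennreal_enn2real)

lemma P_nonneg: "P x \<ge> 0"
  by (simp add: Pibar_def)

lemma P_anti: assumes "0 < x" "x \<le> y" shows "P y \<le> P x"
proof -
  have "emeasure M {y<..} \<le> emeasure M {x<..}" using assms by (intro emeasure_mono) auto
  then show ?thesis using assms P_eq[of x] P_eq[of y] by (metis ennreal_le_iff P_nonneg order.strict_trans2)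
qed

lemma P_neg: "x \<le> 0 \<Longrightarrow> P x = 0"
proof -
  assume "x \<le> 0"
  then have "emeasure M {0<..} \<le> emeasure M {x<..}" by (intro emeasure_mono) auto
  then have "emeasure M {x<..} = \<infinity>" using inf by (simp add: infinite_measure_def top_unique)
  then show "P x = 0" by (simp add: Pibar_def measure_def)
qed

lemma P_borel[measurable]: "P \<in> borel_measurable borel"
proof -
  have "(\<lambda>x. - P x) \<in> borel_measurable borel"
  proof (rule borel_measurable_piecewise_mono[of "{{..0}, {0<..}}"])
    show "\<And>c. c \<in> {{..0}, {0<..}} \<Longrightarrow> mono_on c (\<lambda>x. - P x)"
      by (auto simp: mono_on_def P_neg intro: P_anti)
  qed auto
  then have "(\<lambda>x. - (- P x)) \<in> borel_measurable borel" by measurable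
  then show ?thesis by simp
qed

lemma P_to_inf: "filterlim P at_top (at_right 0)"
proof -
  have U: "(\<Union>n. {1 / real (Suc n)<..}) = {0::real<..}"
  proof safe
    fix x :: real assume "x > 0"
    then obtain n where "1 / real (Suc n) < x"
      by (metis Suc_eq_plus1 nat_approx_posE of_nat_Suc)
    then show "x \<in> (\<Union>n. {1 / real (Suc n)<..})" by auto
  qed (auto intro: less_trans[rotated])
  have inc: "incseq (\<lambda>n. {1 / real (Suc n)<..})"
    by (auto simp: incseq_def frac_le intro: le_less_trans[rotated] intro!: divide_left_mono)
  have "(SUP n. emeasure M {1 / real (Suc n)<..}) = emeasure M {0<..}"
    using SUP_emeasure_incseq[OF _ inc, of M] U by (auto simp: image_subset_iff)
  also have "\<dots> = \<infinity>" using inf by (simp add: infinite_measure_def)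
  finally have sup: "(SUP n. emeasure M {1 / real (Suc n)<..}) = \<infinity>" .
  show ?thesis unfolding filterlim_at_top
  proof
    fix Z :: real
    have "ennreal Z < (SUP n. emeasure M {1 / real (Suc n)<..})" unfolding sup by simp
    then have "\<exists>n\<in>UNIV. ennreal Z < emeasure M {1 / real (Suc n)<..}" by (simp only: less_SUP_iff)
    then obtain n where n: "ennreal Z < emeasure M {1 / real (Suc n)<..}" by blast
    have n': "ennreal Z < ennreal (P (1 / real (Suc n)))"
      using n P_eq[of "1 / real (Suc n)"] by simp
    have "Z \<le> P (1 / real (Suc n))"
    proof (cases "Z \<le> 0")
      case True then show ?thesis using P_nonneg order_trans by blast
    next
      case False then show ?thesis using ennreal_less_iff[of Z] n' by simp
    qed
    show "\<forall>\<^sub>F x in at_right 0. Z \<le> P x"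
      unfolding eventually_at_right_field
    proof (intro exI[of _ "1 / real (Suc n)"] conjI allI impI)
      fix y :: real assume "0 < y" "y < 1 / real (Suc n)"
      then show "Z \<le> P y" using \<open>Z \<le> P (1 / real (Suc n))\<close> P_anti[of y "1 / real (Suc n)"] by simp
    qed simp
  qed
qed

lemma inv_props:
  assumes r: "r \<ge> P 1"
  shows "Pibar_inv M r > 0" "P (Pibar_inv M r) = r"
proof -
  define T where "T = {x. x > 0 \<and> P x \<le> r}"
  have inv: "Pibar_inv M r = Inf T" by (simp add: Pibar_inv_def T_def)
  have "1 \<in> T" using r by (simp add: T_def)
  have bdd: "bdd_below T" by (auto simp: T_def bdd_below_def intro!: exI[of _ 0])
  have "\<forall>\<^sub>F x in at_right 0. r + 1 \<le> P x" using P_to_inf by (simp add: filterlim_at_top)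
  then obtain c where c: "c > 0" "\<And>y. 0 < y \<Longrightarrow> y < c \<Longrightarrow> r + 1 \<le> P y"
    unfolding eventually_at_right_field by auto
  have lb: "x \<ge> c" if "x \<in> T" for x using c that by (force simp: T_def)
  have pos: "Inf T \<ge> c" using \<open>1 \<in> T\<close> lb by (intro cInf_greatest) auto
  then show "Pibar_inv M r > 0" using c inv by simp
  define br where "br = Inf T"
  have brpos: "br > 0" using pos c br_def by simp
  have up: "P (br + e) \<le> r" if "e > 0" for e
  proof -
    obtain x where "x \<in> T" "x < br + e" using cInf_lessD[of T "br + e"] \<open>1 \<in> T\<close> \<open>e>0\<close> br_def by fastforce
    then show ?thesis using P_anti[of x "br + e"] by (auto simp: T_def)
  qed
  have low: "P x > r" if "0 < x" "x < br" for x
  proof (rule ccontr)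
    assume "\<not> P x > r"
    then have "x \<in> T" using that by (simp add: T_def)
    then have "br \<le> x" using bdd br_def by (simp add: cInf_lower)
    then show False using that by simp
  qed
  have U: "(\<Union>n. {br + 1 / real (Suc n)<..}) = {br<..}"
  proof safe
    fix x :: real assume "x > br"
    then obtain n where "1 / real (Suc n) < x - br"
      by (metis Suc_eq_plus1 nat_approx_posE of_nat_Suc diff_gt_0_iff_gt)
    then show "x \<in> (\<Union>n. {br + 1 / real (Suc n)<..})" by (intro UN_I[of n]) auto
  next
    fix x n assume "br + 1 / real (Suc n) < x" then show "br < x"
      by (smt (verit) of_nat_0_less_iff zero_less_Suc divide_pos_pos)
  qed
  have inc: "incseq (\<lambda>n. {br + 1 / real (Suc n)<..})"
    by (auto simp: incseq_def frac_le intro: le_less_trans[rotated] intro!: divide_left_mono)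
  have "emeasure M {br<..} = (SUP n. emeasure M {br + 1 / real (Suc n)<..})"
    using SUP_emeasure_incseq[OF _ inc, of M] U by (auto simp: image_subset_iff)
  also have "\<dots> \<le> ennreal r"
  proof (rule SUP_least)
    fix n
    have "emeasure M {br + 1 / real (Suc n)<..} = ennreal (P (br + 1 / real (Suc n)))"
    proof (rule P_eq[symmetric])
      have "0 < 1 / real (Suc n)" by simp
      then show "0 < br + 1 / real (Suc n)" using brpos by linarith
    qed
    also have "\<dots> \<le> ennreal r" using up[of "1 / real (Suc n)"] by (simp add: ennreal_leI)
    finally show "emeasure M {br + 1 / real (Suc n)<..} \<le> ennreal r" .
  qed
  finally have "ennreal (P br) \<le> ennreal r" using P_eq[OF brpos] by simp
  moreover have "0 \<le> r" using r P_nonneg[of 1] by linarith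
  ultimately have le: "P br \<le> r" using ennreal_le_iff by blast
  define X where "X n = br - br / (2 * real (Suc n))" for n
  have Xpos: "0 < X n" "X n < br" for n
  proof -
    have "0 < br / (2 * real (Suc n))" using brpos by simp
    moreover have "br / (2 * real (Suc n)) < br" using brpos by (simp add: divide_less_eq)
    ultimately show "0 < X n" "X n < br" by (auto simp: X_def)
  qed
  have I: "(\<Inter>n. {X n<..}) = {br..}"
  proof (intro set_eqI iffI)
    fix x assume x: "x \<in> (\<Inter>n. {X n<..})"
    show "x \<in> {br..}"
    proof (rule ccontr)
      assume "x \<notin> {br..}"
      then have "br - x > 0" by simp
      then obtain n where n: "1 / real (Suc n) < (br - x) / br"
        using brpos by (metis Suc_eq_plus1 nat_approx_posE of_nat_Suc divide_pos_pos)
      have "br / (2 * real (Suc n)) \<le> br / real (Suc n)" using brpos by (simp add: frac_le)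
      also have "\<dots> < br - x" using n brpos by (simp add: field_simps)
      finally have "X n > x" by (simp add: X_def)
      moreover have "x > X n" using x by blast
      ultimately show False by simp
    qed
  next
    fix x assume x: "x \<in> {br..}"
    have "\<forall>n. X n < x" using Xpos(2) x by (meson atLeast_iff less_le_trans)
    then show "x \<in> (\<Inter>n. {X n<..})" by simp
  qed
  have dec: "decseq (\<lambda>n. {X n<..})"
  proof (rule decseq_SucI)
    fix n
    have "br / (2 * real (Suc (Suc n))) \<le> br / (2 * real (Suc n))" using brpos by (simp add: frac_le)
    then show "{X (Suc n)<..} \<subseteq> {X n<..}" by (auto simp: X_def)
  qed
  have "(INF n. emeasure M {X n<..}) = emeasure M (\<Inter>n. {X n<..})"
  proof (rule INF_emeasure_decseq[OF _ dec])
    show "range (\<lambda>n. {X n<..}) \<subseteq> sets M" by auto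
    show "emeasure M {X i<..} \<noteq> \<infinity>" for i using fin[OF Xpos(1)[of i]] by (simp add: less_top)
  qed
  also have "\<dots> = emeasure M ({br<..} \<union> {br})" 
  proof -
    have "{br..} = {br<..} \<union> {br}" by auto
    with I show ?thesis by simp
  qed
  also have "\<dots> = emeasure M {br<..} + emeasure M {br}" by (intro plus_emeasure[symmetric]) auto
  also have "\<dots> = emeasure M {br<..}" using atoml by (simp add: atomless_def)
  finally have eq: "(INF n. emeasure M {X n<..}) = emeasure M {br<..}" .
  have "ennreal r \<le> (INF n. emeasure M {X n<..})"
  proof (rule INF_greatest)
    fix n
    have "ennreal r \<le> ennreal (P (X n))" using low[OF Xpos(1) Xpos(2), of n] by (simp add: ennreal_leI)
    then show "ennreal r \<le> emeasure M {X n<..}" using P_eq[OF Xpos(1)] by simp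
  qed
  then have "ennreal r \<le> ennreal (P br)" using eq P_eq[OF brpos] by simp
  then have "r \<le> P br" using P_nonneg ennreal_le_iff by blast
  then show "P (Pibar_inv M r) = r" using le inv br_def by simp
qed

definition "g = - \<gamma>"
lemma g_pos: "g > 0" using \<gamma>_neg by (simp add: g_def)
definition "L y = g * sqrt (P y)"
definition "A r = a r / g"
definition "d r = b r - a r / g"
definition "\<rho> r = g * sqrt r"

lemma A_pos: "A r > 0" using a_pos g_pos by (simp add: A_def)

lemma L_anti: "0 < u \<Longrightarrow> u \<le> v \<Longrightarrow> L v \<le> L u"
  using P_anti[of u v] g_pos by (simp add: L_def)

lemma rho_top: "filterlim \<rho> at_top at_top"
  unfolding \<rho>_def using g_pos
  by (intro filterlim_tendsto_pos_mult_at_top[OF tendsto_const _ sqrt_at_top])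

lemma alg_id:
  fixes s q g :: real assumes "s > 0" "q \<ge> 0"
  shows "g * q - g * s = - g * ((s^2 - q^2) / s) / (q / s + 1)"
proof -
  have qs: "q + s > 0" using assms by simp
  have e1: "q / s + 1 = (q + s) / s" using assms by (simp add: field_simps)
  have e2x: "X / s / ((q + s) / s) = X / (q + s)" for X
    using assms qs by (simp add: divide_divide_times_eq)
  note e2 = e2x[of "s^2 - q^2"]
  have e3: "s^2 - q^2 = (s - q) * (q + s)" by (simp add: power2_eq_square algebra_simps)
  have e4: "(s^2 - q^2) / (q + s) = s - q" using qs by (simp add: e3)
  have "- g * ((s^2 - q^2) / s) / (q / s + 1) = - g * ((s^2 - q^2) / s / (q / s + 1))"
    by (simp only: times_divide_eq_right)
  also have "\<dots> = - g * (s - q)" by (simp only: e1 e2 e4)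
  finally show ?thesis by (simp add: algebra_simps)
qed

lemma par0:
  assumes sig: "\<sigma> > 0"
  shows "(\<forall>\<^sub>F r in at_top. A r * \<sigma> + d r > 0) \<and> ((\<lambda>r. L (A r * \<sigma> + d r) - \<rho> r) \<longlongrightarrow> - ln \<sigma>) at_top"
proof -
  define x where "x = (\<sigma> - 1) / g"
  have gx: "1 - \<gamma> * x = \<sigma>" using g_pos by (simp add: x_def g_def field_simps)
  have y: "a r * x + b r = A r * \<sigma> + d r" for r
    using g_pos by (simp add: x_def A_def d_def field_simps)
  note c = conv[of x, unfolded gx y]
  have c1: "\<forall>\<^sub>F r in at_top. A r * \<sigma> + d r > 0" using c sig by auto
  define z where "z r = (r - P (A r * \<sigma> + d r)) / sqrt r" for r
  have zl: "(z \<longlongrightarrow> (2 / g) * ln \<sigma>) at_top" using c sig unfolding z_def by (simp add: g_def)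
  have inv0: "((\<lambda>r. inverse (sqrt r)) \<longlongrightarrow> 0) at_top"
    by (rule tendsto_inverse_0_at_top[OF sqrt_at_top])
  have lim: "((\<lambda>r. - g * z r / (sqrt (1 - z r * inverse (sqrt r)) + 1)) \<longlongrightarrow>
      - g * ((2 / g) * ln \<sigma>) / (sqrt (1 - ((2 / g) * ln \<sigma>) * 0) + 1)) at_top"
    by (intro tendsto_intros zl inv0) simp
  have lim': "((\<lambda>r. - g * z r / (sqrt (1 - z r * inverse (sqrt r)) + 1)) \<longlongrightarrow> - ln \<sigma>) at_top"
    using lim g_pos by simp
  have ev: "\<forall>\<^sub>F r in at_top. - g * z r / (sqrt (1 - z r * inverse (sqrt r)) + 1) = L (A r * \<sigma> + d r) - \<rho> r"
    using eventually_gt_at_top[of 0]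
  proof eventually_elim
    case (elim r)
    define p where "p = P (A r * \<sigma> + d r)"
    have p0: "p \<ge> 0" by (simp add: p_def P_nonneg)
    have s0: "sqrt r > 0" using elim by simp
    have "1 - z r * inverse (sqrt r) = p / r" using elim
      by (simp add: z_def p_def field_simps)
    then have "sqrt (1 - z r * inverse (sqrt r)) = sqrt p / sqrt r" by (simp add: real_sqrt_divide)
    moreover have "z r = ((sqrt r)^2 - (sqrt p)^2) / sqrt r"
      using elim p0 by (simp add: z_def p_def)
    ultimately show ?case
      using alg_id[OF s0, of "sqrt p" g] p0 by (simp add: L_def \<rho>_def p_def)
  qed
  show ?thesis using c1 lim' tendsto_cong[OF ev] by simp
qed

lemma d_to_0: "(d \<longlongrightarrow> 0) at_top"
proof (rule tendstoI)
  fix \<epsilon> :: real assume eps: "\<epsilon> > 0"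
  define \<eta> where "\<eta> = \<epsilon> / 2"
  have eta: "\<eta> > 0" using eps by (simp add: \<eta>_def)
  have bnd: "L y \<le> L \<eta>" if "y \<ge> \<eta>" for y using L_anti[OF eta that] .
  have one: "(1::real) > 0" and two: "(2::real) > 0" by simp_all
  have E1: "\<forall>\<^sub>F r in at_top. L (A r * 1 + d r) - \<rho> r > -1"
    using tendstoD[OF conjunct2[OF par0[OF one]] one] by eventually_elim (simp add: dist_real_def abs_less_iff)
  have E2: "\<forall>\<^sub>F r in at_top. L (A r * 2 + d r) - \<rho> r > - ln 2 - 1"
    using tendstoD[OF conjunct2[OF par0[OF two]] one] by eventually_elim (simp add: dist_real_def abs_less_iff)
  have E3: "\<forall>\<^sub>F r in at_top. \<rho> r > L \<eta> + 3"
    using rho_top by (simp add: filterlim_at_top_dense)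
  have ln2: "ln (2::real) < 1" using ln_less_self[of 2] by (smt (verit) ln_2_less_1)
  show "\<forall>\<^sub>F r in at_top. dist (d r) 0 < \<epsilon>"
    using E1 E2 E3 conjunct1[OF par0[OF one]] conjunct1[OF par0[OF two]]
  proof eventually_elim
    case (elim r)
    have u1: "A r * 1 + d r < \<eta>"
    proof (rule ccontr)
      assume "\<not> ?thesis" then have "L (A r * 1 + d r) \<le> L \<eta>" using bnd by simp
      with elim show False by linarith
    qed
    have u2: "A r * 2 + d r < \<eta>"
    proof (rule ccontr)
      assume "\<not> ?thesis" then have "L (A r * 2 + d r) \<le> L \<eta>" using bnd by simp
      with elim ln2 show False by linarith
    qed
    show ?case using u1 u2 elim(4,5) by (simp add: dist_real_def \<eta>_def abs_less_iff)
  qed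
qed

definition "\<phi> r = (sqrt r + 1 / g)^2"

lemma phi_ge: "r \<ge> 0 \<Longrightarrow> \<phi> r \<ge> r"
proof -
  assume r: "r \<ge> 0"
  have "sqrt r \<le> sqrt r + 1 / g" using g_pos by simp
  then have "(sqrt r)^2 \<le> (sqrt r + 1 / g)^2" using r by (intro power_mono) auto
  then show ?thesis using r by (simp add: \<phi>_def)
qed

lemma phi_top: "filterlim \<phi> at_top at_top"
  by (rule filterlim_at_top_mono[OF filterlim_ident]) (auto intro: eventually_mono[OF eventually_ge_at_top[of 0]] phi_ge)

lemma rho_phi: assumes "r \<ge> 0" shows "\<rho> (\<phi> r) = \<rho> r + 1"
proof -
  have "sqrt r + 1 / g \<ge> 0" using g_pos assms by simp
  then have "sqrt (\<phi> r) = sqrt r + 1 / g" by (simp add: \<phi>_def)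
  then show ?thesis using g_pos by (simp add: \<rho>_def distrib_left)
qed

lemma W: assumes t: "t > 0"
  shows "((\<lambda>r. (A (\<phi> r) * t + d (\<phi> r) - d r) / A r) \<longlongrightarrow> t * exp (-1)) at_top"
proof (rule INV[where L = L and c = \<rho>])
  show "\<And>u v. 0 < u \<Longrightarrow> u \<le> v \<Longrightarrow> L v \<le> L u" by (rule L_anti)
  show "\<And>\<sigma>. \<sigma> > 0 \<Longrightarrow> (\<forall>\<^sub>F i in at_top. A i * \<sigma> + d i > 0) \<and>
                 ((\<lambda>i. L (A i * \<sigma> + d i) - \<rho> i) \<longlongrightarrow> - ln \<sigma>) at_top" by (rule par0)
  show "\<forall>\<^sub>F i in at_top. A i > 0" using A_pos by simp
  show "t * exp (-1) > 0" using t by simp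
  show "\<forall>\<^sub>F i in at_top. A (\<phi> i) * t + d (\<phi> i) > 0"
    using filterlim_iff[THEN iffD1, OF phi_top, rule_format, OF conjunct1[OF par0[OF t]]] .
  have l: "((\<lambda>r. L (A (\<phi> r) * t + d (\<phi> r)) - \<rho> (\<phi> r)) \<longlongrightarrow> - ln t) at_top"
    by (rule filterlim_compose[OF conjunct2[OF par0[OF t]] phi_top])
  have "((\<lambda>r. (L (A (\<phi> r) * t + d (\<phi> r)) - \<rho> (\<phi> r)) + 1) \<longlongrightarrow> - ln t + 1) at_top"
    by (intro tendsto_intros l)
  moreover have "- ln t + 1 = - ln (t * exp (-1))" using t by (simp add: ln_mult)
  moreover have "\<forall>\<^sub>F r in at_top. (L (A (\<phi> r) * t + d (\<phi> r)) - \<rho> (\<phi> r)) + 1 = L (A (\<phi> r) * t + d (\<phi> r)) - \<rho> r"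
    using eventually_ge_at_top[of 0] by eventually_elim (simp add: rho_phi)
  ultimately show "((\<lambda>r. L (A (\<phi> r) * t + d (\<phi> r)) - \<rho> r) \<longlongrightarrow> - ln (t * exp (-1))) at_top"
    using tendsto_cong by fastforce
qed

lemma shiftA: "((\<lambda>r. A (\<phi> r) / A r) \<longlongrightarrow> exp (-1)) at_top"
proof -
  have "((\<lambda>r. (A (\<phi> r) * 2 + d (\<phi> r) - d r) / A r - (A (\<phi> r) * 1 + d (\<phi> r) - d r) / A r)
     \<longlongrightarrow> 2 * exp (-1) - 1 * exp (-1)) at_top"
    by (intro tendsto_diff W) auto
  moreover have "(A (\<phi> r) * 2 + d (\<phi> r) - d r) / A r - (A (\<phi> r) * 1 + d (\<phi> r) - d r) / A r = A (\<phi> r) / A r" for r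
    using A_pos[of r] by (simp add: field_simps)
  ultimately show ?thesis by simp
qed

lemma shiftd: "((\<lambda>r. (d (\<phi> r) - d r) / A r) \<longlongrightarrow> 0) at_top"
proof -
  have "((\<lambda>r. (A (\<phi> r) * 1 + d (\<phi> r) - d r) / A r - A (\<phi> r) / A r)
     \<longlongrightarrow> 1 * exp (-1) - exp (-1)) at_top"
    by (intro tendsto_diff W shiftA) auto
  moreover have "(A (\<phi> r) * 1 + d (\<phi> r) - d r) / A r - A (\<phi> r) / A r = (d (\<phi> r) - d r) / A r" for r
    using A_pos[of r] by (simp add: field_simps)
  ultimately show ?thesis by simp
qed

lemma ratio0: "((\<lambda>r. d r / A r) \<longlongrightarrow> 0) at_top"
proof (rule tendstoI)
  fix \<epsilon> :: real assume eps: "\<epsilon> > 0"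
  define e where "e = \<epsilon> / 4"
  have e: "e > 0" using eps by (simp add: e_def)
  have ex: "exp (-1::real) < 2/3"
  proof -
    have "2 \<le> exp (1::real)" using exp_ge_add_one_self[of 1] by simp
    then have "exp (-1::real) \<le> 1/2" by (simp add: exp_minus field_simps)
    then show ?thesis by simp
  qed
  have "\<forall>\<^sub>F r in at_top. A (\<phi> r) / A r < 2/3"
    using order_tendstoD(2)[OF shiftA ex] .
  moreover have "\<forall>\<^sub>F r in at_top. \<bar>(d (\<phi> r) - d r) / A r\<bar> < e"
    using tendstoD[OF shiftd e] by (simp add: dist_real_def)
  ultimately have "\<forall>\<^sub>F r in at_top. A (\<phi> r) / A r < 2/3 \<and> \<bar>(d (\<phi> r) - d r) / A r\<bar> < e \<and> r \<ge> 0"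
    using eventually_ge_at_top[of 0] by eventually_elim auto
  then obtain R where R: "\<And>r. r \<ge> R \<Longrightarrow> A (\<phi> r) / A r < 2/3 \<and> \<bar>(d (\<phi> r) - d r) / A r\<bar> < e \<and> r \<ge> 0"
    by (auto simp: eventually_at_top_linorder)
  have main: "\<bar>d r / A r\<bar> \<le> 3 * e" if r: "r \<ge> R" for r
  proof -
    have r0: "r \<ge> 0" using R[OF r] by simp
    define rk where "rk k = (sqrt r + real k / g)^2" for k :: nat
    have sq: "sqrt (rk k) = sqrt r + real k / g" for k
    proof -
      have "sqrt r + real k / g \<ge> 0" using g_pos r0 by simp
      then show ?thesis by (simp add: rk_def)
    qed
    have step: "\<phi> (rk k) = rk (Suc k)" for k
      unfolding \<phi>_def sq by (simp add: rk_def add_divide_distrib algebra_simps)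
    have geR: "rk k \<ge> R" for k
    proof -
      have "sqrt r \<le> sqrt r + real k / g" using g_pos by simp
      then have "(sqrt r)^2 \<le> (sqrt r + real k / g)^2" using r0 by (intro power_mono) auto
      then show ?thesis using r r0 by (simp add: rk_def)
    qed
    have ind: "A (rk k) \<le> (2/3)^k * A r \<and> \<bar>d (rk k) - d r\<bar> \<le> 3 * e * A r * (1 - (2/3)^k)" for k
    proof (induction k)
      case 0 then show ?case by (simp add: rk_def r0)
    next
      case (Suc k)
      have Rk: "A (\<phi> (rk k)) / A (rk k) < 2/3 \<and> \<bar>(d (\<phi> (rk k)) - d (rk k)) / A (rk k)\<bar> < e"
        using R[OF geR[of k]] by simp
      have Ap: "A (rk k) > 0" by (rule A_pos)
      have a1: "A (rk (Suc k)) \<le> 2/3 * A (rk k)" using Rk Ap by (simp add: step divide_less_eq)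
      have a2: "\<bar>d (rk (Suc k)) - d (rk k)\<bar> \<le> e * A (rk k)" using Rk Ap
        by (simp add: step abs_divide divide_less_eq less_imp_le)
      have "A (rk (Suc k)) \<le> 2/3 * ((2/3)^k * A r)" using a1 Suc.IH by linarith
      moreover have "\<bar>d (rk (Suc k)) - d r\<bar> \<le> e * ((2/3)^k * A r) + 3 * e * A r * (1 - (2/3)^k)"
      proof -
        have "e * A (rk k) \<le> e * ((2/3)^k * A r)" using Suc.IH e by (intro mult_left_mono) auto
        then show ?thesis using a2 Suc.IH by linarith
      qed
      moreover have "e * ((2/3)^k * A r) + 3 * e * A r * (1 - (2/3)^k) = 3 * e * A r * (1 - (2/3)^(Suc k))"
        by (simp add: algebra_simps)
      ultimately show ?case by simp
    qed
    have rk_top: "filterlim rk at_top sequentially"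
    proof (rule filterlim_at_top_mono)
      show "filterlim (\<lambda>k. (real k / g)^2) at_top sequentially"
      proof (intro filterlim_pow_at_top)
        have "filterlim (\<lambda>k. real k * (1 / g)) at_top sequentially"
          using g_pos by (intro filterlim_at_top_mult_tendsto_pos[OF tendsto_const _ filterlim_real_sequentially]) auto
        then show "filterlim (\<lambda>k. real k / g) at_top sequentially" by simp
      qed simp
      show "\<forall>\<^sub>F k in sequentially. (real k / g)^2 \<le> rk k"
        unfolding rk_def using g_pos r0 by (intro always_eventually allI power_mono) auto
    qed
    have lim: "(\<lambda>k. \<bar>d (rk k) - d r\<bar>) \<longlonglongrightarrow> \<bar>0 - d r\<bar>"
      by (intro tendsto_intros filterlim_compose[OF d_to_0 rk_top])
    have "\<bar>0 - d r\<bar> \<le> 3 * e * A r"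
    proof (rule LIMSEQ_le_const2[OF lim])
      show "\<exists>N. \<forall>n\<ge>N. \<bar>d (rk n) - d r\<bar> \<le> 3 * e * A r"
      proof (intro exI allI impI)
        fix n
        have "3 * e * A r * (1 - (2/3)^n) \<le> 3 * e * A r"
          using e A_pos[of r] by (simp add: mult_left_le)
        then show "\<bar>d (rk n) - d r\<bar> \<le> 3 * e * A r" using ind[of n] by linarith
      qed
    qed
    then show ?thesis using A_pos[of r] by (simp add: abs_divide divide_le_eq)
  qed
  show "\<forall>\<^sub>F r in at_top. dist (d r / A r) 0 < \<epsilon>"
    using eventually_ge_at_top[of R]
  proof eventually_elim
    case (elim r)
    have "dist (d r / A r) 0 = \<bar>d r / A r\<bar>" by simp
    then show ?case using main[OF elim] eps e_def by linarith
  qed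
qed

lemma par1:
  assumes sig: "\<sigma> > 0"
  shows "(\<forall>\<^sub>F r in at_top. A r * \<sigma> + 0 > 0) \<and> ((\<lambda>r. L (A r * \<sigma> + 0) - \<rho> r) \<longlongrightarrow> - ln \<sigma>) at_top"
proof
  show "\<forall>\<^sub>F r in at_top. A r * \<sigma> + 0 > 0" using A_pos sig by simp
  have "((\<lambda>r. L (A r * \<sigma>) - \<rho> r) \<longlongrightarrow> - ln \<sigma>) at_top"
  proof (rule FW[where \<beta> = A and e = d and L = L and c = \<rho> and z = "\<lambda>r. A r * \<sigma>"])
    show "\<And>u v. 0 < u \<Longrightarrow> u \<le> v \<Longrightarrow> L v \<le> L u" by (rule L_anti)
    show "\<And>\<sigma>. \<sigma> > 0 \<Longrightarrow> (\<forall>\<^sub>F i in at_top. A i * \<sigma> + d i > 0) \<and>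
                 ((\<lambda>i. L (A i * \<sigma> + d i) - \<rho> i) \<longlongrightarrow> - ln \<sigma>) at_top" by (rule par0)
    show "\<forall>\<^sub>F i in at_top. A i > 0" using A_pos by simp
    show "\<sigma> > 0" by (rule sig)
    have "((\<lambda>r. \<sigma> - d r / A r) \<longlongrightarrow> \<sigma> - 0) at_top" by (intro tendsto_intros ratio0)
    moreover have "\<sigma> - d r / A r = (A r * \<sigma> - d r) / A r" for r using A_pos[of r] by (simp add: field_simps)
    ultimately show "((\<lambda>r. (A r * \<sigma> - d r) / A r) \<longlongrightarrow> \<sigma>) at_top" by simp
  qed
  then show "((\<lambda>r. L (A r * \<sigma> + 0) - \<rho> r) \<longlongrightarrow> - ln \<sigma>) at_top" by simp
qed

lemma rho_P: "\<rho> (P y) = L y" by (simp add: \<rho>_def L_def)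

lemma parY:
  assumes sig: "\<sigma> > 0"
  shows "(\<forall>\<^sub>F y in at_right 0. A (P y) * \<sigma> + 0 > 0) \<and> ((\<lambda>y. L (A (P y) * \<sigma> + 0) - L y) \<longlongrightarrow> - ln \<sigma>) (at_right 0)"
proof
  show "\<forall>\<^sub>F y in at_right 0. A (P y) * \<sigma> + 0 > 0" using A_pos sig by simp
  have "((\<lambda>y. L (A (P y) * \<sigma> + 0) - \<rho> (P y)) \<longlongrightarrow> - ln \<sigma>) (at_right 0)"
    by (rule filterlim_compose[OF conjunct2[OF par1[OF sig]] P_to_inf])
  then show "((\<lambda>y. L (A (P y) * \<sigma> + 0) - L y) \<longlongrightarrow> - ln \<sigma>) (at_right 0)" by (simp add: rho_P)
qed

lemma y_over_alpha: "((\<lambda>y. (y - 0) / A (P y)) \<longlongrightarrow> 1) (at_right 0)"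
proof (rule INV[where L = L and c = L and z = "\<lambda>y. y" and \<beta> = "\<lambda>y. A (P y)" and e = "\<lambda>_. 0"])
  show "\<And>u v. 0 < u \<Longrightarrow> u \<le> v \<Longrightarrow> L v \<le> L u" by (rule L_anti)
  show "\<And>\<sigma>. \<sigma> > 0 \<Longrightarrow> (\<forall>\<^sub>F y in at_right 0. A (P y) * \<sigma> + 0 > 0) \<and>
        ((\<lambda>y. L (A (P y) * \<sigma> + 0) - L y) \<longlongrightarrow> - ln \<sigma>) (at_right 0)" by (rule parY)
  show "\<forall>\<^sub>F y in at_right 0. A (P y) > 0" using A_pos by simp
  show "((\<lambda>y. L y - L y) \<longlongrightarrow> - ln 1) (at_right 0)" by simp
  show "(1::real) > 0" by simp
  show "\<forall>\<^sub>F y in at_right (0::real). y > 0" by (simp add: eventually_at_right_less)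
qed

lemma RV: assumes l: "l > 0" shows "((\<lambda>y. L (l * y) - L y) \<longlongrightarrow> - ln l) (at_right 0)"
proof (rule FW[where \<beta> = "\<lambda>y. A (P y)" and e = "\<lambda>_. 0" and L = L and c = L and z = "\<lambda>y. l * y"])
  show "\<And>u v. 0 < u \<Longrightarrow> u \<le> v \<Longrightarrow> L v \<le> L u" by (rule L_anti)
  show "\<And>\<sigma>. \<sigma> > 0 \<Longrightarrow> (\<forall>\<^sub>F y in at_right 0. A (P y) * \<sigma> + 0 > 0) \<and>
        ((\<lambda>y. L (A (P y) * \<sigma> + 0) - L y) \<longlongrightarrow> - ln \<sigma>) (at_right 0)" by (rule parY)
  show "\<forall>\<^sub>F y in at_right 0. A (P y) > 0" using A_pos by simp
  show "l > 0" by (rule l)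
  have "((\<lambda>y. l * ((y - 0) / A (P y))) \<longlongrightarrow> l * 1) (at_right 0)" by (intro tendsto_intros y_over_alpha)
  then show "((\<lambda>y. (l * y - 0) / A (P y)) \<longlongrightarrow> l) (at_right 0)" by simp
qed

lemma sigfin: "sigma_finite_measure M"
proof
  show "\<exists>A. countable A \<and> A \<subseteq> sets M \<and> \<Union>A = space M \<and> (\<forall>a\<in>A. emeasure M a \<noteq> \<infinity>)"
  proof (intro exI[of _ "insert {..0} (range (\<lambda>n. {1 / real (Suc n)<..}))"] conjI)
    show "countable (insert {..0::real} (range (\<lambda>n. {1 / real (Suc n)<..})))" by simp
    show "insert {..0::real} (range (\<lambda>n. {1 / real (Suc n)<..})) \<subseteq> sets M" by auto
    show "\<Union>(insert {..0::real} (range (\<lambda>n. {1 / real (Suc n)<..}))) = space M"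
    proof (intro set_eqI iffI)
      fix x :: real assume "x \<in> space M"
      show "x \<in> \<Union>(insert {..0::real} (range (\<lambda>n. {1 / real (Suc n)<..})))"
      proof (cases "x \<le> 0")
        case False
        then obtain n where "1 / real (Suc n) < x" by (metis Suc_eq_plus1 nat_approx_posE of_nat_Suc not_le)
        then show ?thesis by blast
      qed simp
    qed simp
    show "\<forall>a\<in>insert {..0::real} (range (\<lambda>n. {1 / real (Suc n)<..})). emeasure M a \<noteq> \<infinity>"
      using levy fin by (auto simp: subordinator_levy_measure_def less_top)
  qed
qed

lemma ftc_pow:
  assumes u: "u \<ge> 0" and p: "p \<ge> 1"
  shows "(\<integral>\<^sup>+ v. ennreal (p * v powr (p - 1)) * indicator {0..u} v \<partial>lborel) = ennreal (u powr p)"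
proof -
  have "((\<lambda>x. x powr (p - 1)) has_integral (u powr (p - 1 + 1) / (p - 1 + 1))) {0..u}"
    using p u by (intro has_integral_powr_from_0) auto
  then have "((\<lambda>x. p * x powr (p - 1)) has_integral p * (u powr (p - 1 + 1) / (p - 1 + 1))) {0..u}"
    by (rule has_integral_mult_right)
  then have "((\<lambda>x. p * x powr (p - 1)) has_integral u powr p) {0..u}" using p by simp
  then show ?thesis using p by (intro nn_integral_has_integral_lebesgue') auto
qed

lemma emeas_interval:
  assumes v: "0 < v" "v \<le> w"
  shows "emeasure M {v..w} = ennreal (P v - P w)"
proof -
  have wp: "w > 0" using v by simp
  have "emeasure M {v..w} + emeasure M {w<..} = emeasure M ({v..w} \<union> {w<..})"
    by (intro plus_emeasure) auto
  also have "{v..w} \<union> {w<..} = {v<..} \<union> {v}" using v by auto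
  also have "emeasure M ({v<..} \<union> {v}) = emeasure M {v<..} + emeasure M {v}"
    by (intro plus_emeasure[symmetric]) auto
  also have "\<dots> = ennreal (P v)" using atoml P_eq[OF v(1)] by (simp add: atomless_def)
  finally have eq: "emeasure M {v..w} + ennreal (P w) = ennreal (P v)" using P_eq[OF wp] by simp
  have nt: "emeasure M {v..w} \<noteq> \<infinity>"
  proof
    assume "emeasure M {v..w} = \<infinity>"
    with eq show False by simp
  qed
  define e where "e = enn2real (emeasure M {v..w})"
  have ee: "emeasure M {v..w} = ennreal e" using nt by (simp add: e_def ennreal_enn2real_if less_top)
  have e0: "e \<ge> 0" by (simp add: e_def)
  have "ennreal (e + P w) = ennreal (P v)" using eq ee ennreal_plus[OF e0 P_nonneg, of w] by simp
  moreover have "0 \<le> e + P w" using e0 P_nonneg[of w] by linarith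
  ultimately have "e + P w = P v" using ennreal_inj[OF _ P_nonneg] by blast
  then have "e = P v - P w" by linarith
  then show ?thesis using ee by simp
qed

lemma layer:
  assumes w: "w > 0" and p: "p \<ge> 1"
  shows "(\<integral>\<^sup>+ u. ennreal (indicator {0..w} u * u powr p) \<partial>M) =
         (\<integral>\<^sup>+ v. ennreal (indicator {0..w} v * (p * v powr (p - 1) * (P v - P w))) \<partial>lborel)"
proof -
  interpret pair_sigma_finite M lborel by (intro pair_sigma_finite.intro sigfin sigma_finite_lborel)
  define F where "F u v = (if 0 \<le> v \<and> v \<le> u \<and> u \<le> w then ennreal (p * v powr (p - 1)) else 0)" for u v :: real
  have "(\<lambda>(u, v). F u v) \<in> borel_measurable (borel \<Otimes>\<^sub>M borel)" unfolding F_def by measurable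
  then have F_meas: "(\<lambda>(u, v). F u v) \<in> borel_measurable (M \<Otimes>\<^sub>M lborel)"
    using measurable_cong_sets[OF sets_pair_measure_cong[OF sets_M sets_lborel] refl] by simp
  have inner1: "ennreal (indicator {0..w} u * u powr p) = (\<integral>\<^sup>+ v. F u v \<partial>lborel)" for u
  proof (cases "0 \<le> u \<and> u \<le> w")
    case True
    have "(\<integral>\<^sup>+ v. F u v \<partial>lborel) = (\<integral>\<^sup>+ v. ennreal (p * v powr (p - 1)) * indicator {0..u} v \<partial>lborel)"
      using True by (intro nn_integral_cong) (auto simp: F_def indicator_def)
    also have "\<dots> = ennreal (u powr p)" using True p by (intro ftc_pow) auto
    finally show ?thesis using True by simp
  next
    case False
    then have "\<And>v. F u v = 0" by (auto simp: F_def)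
    then show ?thesis using False by (simp add: indicator_def)
  qed
  have inner2: "(\<integral>\<^sup>+ u. F u v \<partial>M) = ennreal (indicator {0..w} v * (p * v powr (p - 1) * (P v - P w)))" for v
  proof (cases "0 < v \<and> v \<le> w")
    case True
    have "(\<integral>\<^sup>+ u. F u v \<partial>M) = (\<integral>\<^sup>+ u. ennreal (p * v powr (p - 1)) * indicator {v..w} u \<partial>M)"
      using True by (intro nn_integral_cong) (auto simp: F_def indicator_def)
    also have "\<dots> = ennreal (p * v powr (p - 1)) * emeasure M {v..w}" by (intro nn_integral_cmult_indicator) auto
    also have "\<dots> = ennreal (p * v powr (p - 1)) * ennreal (P v - P w)" using True by (simp add: emeas_interval)
    also have "\<dots> = ennreal (p * v powr (p - 1) * (P v - P w))"
    proof (rule ennreal_mult[symmetric])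
      show "0 \<le> p * v powr (p - 1)" using p by simp
      show "0 \<le> P v - P w" using P_anti[of v w] True by simp
    qed
    finally show ?thesis using True by simp
  next
    case False
    then have "\<And>u. F u v = 0" by (auto simp: F_def)
    moreover have "indicator {0..w} v * (p * v powr (p - 1) * (P v - P w)) = 0" using False by (auto simp: indicator_def)
    ultimately show ?thesis by (simp only: nn_integral_0_iff_AE ennreal_0) simp
  qed
  have "(\<integral>\<^sup>+ u. ennreal (indicator {0..w} u * u powr p) \<partial>M) = (\<integral>\<^sup>+ u. (\<integral>\<^sup>+ v. F u v \<partial>lborel) \<partial>M)"
    by (simp add: inner1)
  also have "\<dots> = (\<integral>\<^sup>+ v. (\<integral>\<^sup>+ u. F u v \<partial>M) \<partial>lborel)" by (rule Fubini'[OF F_meas, symmetric])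
  also have "\<dots> = (\<integral>\<^sup>+ v. ennreal (indicator {0..w} v * (p * v powr (p - 1) * (P v - P w))) \<partial>lborel)"
    by (simp add: inner2)
  finally show ?thesis .
qed

definition "hh p w t = indicator {0..1} t * (p * t powr (p - 1) * (P (w * t) - P w))"

lemma hh_meas[measurable]: "hh p w \<in> borel_measurable borel"
  unfolding hh_def by measurable

lemma hh_nonneg: assumes w: "w > 0" and p: "p \<ge> 1" shows "hh p w t \<ge> 0"
proof (cases "0 < t \<and> t \<le> 1")
  case True
  then have "P w \<le> P (w * t)" using w by (intro P_anti) (auto simp: mult_le_cancel_left1)
  then show ?thesis using True p by (simp add: hh_def)
next
  case False
  then have "t \<notin> {0..1} \<or> t = 0" by auto
  then show ?thesis by (auto simp: hh_def)
qed

lemma subst_lemma: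
  assumes w: "w > 0" and p: "p \<ge> 1"
  shows "(\<integral>\<^sup>+ v. ennreal (indicator {0..w} v * (p * v powr (p - 1) * (P v - P w))) \<partial>lborel) =
         ennreal (w powr p) * (\<integral>\<^sup>+ t. ennreal (hh p w t) \<partial>lborel)"
proof -
  have "(\<integral>\<^sup>+ v. ennreal (indicator {0..w} v * (p * v powr (p - 1) * (P v - P w))) \<partial>lborel) =
     \<bar>w\<bar> * (\<integral>\<^sup>+ t. ennreal (indicator {0..w} (0 + w * t) * (p * (0 + w * t) powr (p - 1) * (P (0 + w * t) - P w))) \<partial>lborel)"
    using w by (intro nn_integral_real_affine) auto
  also have "(\<integral>\<^sup>+ t. ennreal (indicator {0..w} (0 + w * t) * (p * (0 + w * t) powr (p - 1) * (P (0 + w * t) - P w))) \<partial>lborel)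
      = (\<integral>\<^sup>+ t. ennreal (w powr (p - 1)) * ennreal (hh p w t) \<partial>lborel)"
  proof (intro nn_integral_cong)
    fix t :: real
    show "ennreal (indicator {0..w} (0 + w * t) * (p * (0 + w * t) powr (p - 1) * (P (0 + w * t) - P w))) =
          ennreal (w powr (p - 1)) * ennreal (hh p w t)"
    proof (cases "0 \<le> t \<and> t \<le> 1")
      case True
      have i: "indicator {0..w} (w * t) = (1::real)" using True w by (auto simp: indicator_def mult_le_cancel_left1)
      have pm: "(w * t) powr (p - 1) = w powr (p - 1) * t powr (p - 1)" using True w by (simp add: powr_mult)
      have "ennreal (w powr (p - 1)) * ennreal (hh p w t) = ennreal (w powr (p - 1) * hh p w t)"
        using hh_nonneg[OF w p] by (simp add: ennreal_mult)
      moreover have "indicator {0..w} (0 + w * t) * (p * (0 + w * t) powr (p - 1) * (P (0 + w * t) - P w)) = w powr (p - 1) * hh p w t"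
        unfolding add_0_left i pm using True by (simp add: hh_def indicator_def)
      ultimately show ?thesis by simp
    next
      case False
      then have "indicator {0..w} (w * t) = (0::real)" using w
        by (auto simp: indicator_def zero_le_mult_iff mult_le_cancel_left1)
      moreover have "hh p w t = 0" using False by (simp add: hh_def)
      ultimately show ?thesis by simp
    qed
  qed
  also have "\<dots> = ennreal (w powr (p - 1)) * (\<integral>\<^sup>+ t. ennreal (hh p w t) \<partial>lborel)"
    by (intro nn_integral_cmult) auto
  also have "\<bar>w\<bar> * (ennreal (w powr (p - 1)) * (\<integral>\<^sup>+ t. ennreal (hh p w t) \<partial>lborel)) =
      ennreal (w * w powr (p - 1)) * (\<integral>\<^sup>+ t. ennreal (hh p w t) \<partial>lborel)"
    using w by (simp add: ennreal_mult mult.assoc)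
  also have "w * w powr (p - 1) = w powr p" using w by (simp add: powr_mult_base)
  finally show ?thesis .
qed

lemma int_formula:
  assumes w: "w > 0" and p: "p \<ge> 1"
  shows "(LINT u:{0..w}|M. u powr p) = w powr p * (LINT t|lborel. hh p w t)"
proof -
  have "(LINT u:{0..w}|M. u powr p) = (\<integral> u. indicator {0..w} u * u powr p \<partial>M)"
    by (simp add: set_lebesgue_integral_def)
  also have "\<dots> = enn2real (\<integral>\<^sup>+ u. ennreal (indicator {0..w} u * u powr p) \<partial>M)"
    by (intro integral_eq_nn_integral) auto
  also have "\<dots> = enn2real (ennreal (w powr p) * (\<integral>\<^sup>+ t. ennreal (hh p w t) \<partial>lborel))"
    using layer[OF w p] subst_lemma[OF w p] by simp
  also have "\<dots> = w powr p * enn2real (\<integral>\<^sup>+ t. ennreal (hh p w t) \<partial>lborel)"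
    by (simp add: enn2real_mult)
  also have "enn2real (\<integral>\<^sup>+ t. ennreal (hh p w t) \<partial>lborel) = (LINT t|lborel. hh p w t)"
    using hh_nonneg[OF w p] by (intro integral_eq_nn_integral[symmetric]) auto
  finally show ?thesis .
qed

lemma L_top: "filterlim L at_top (at_right 0)"
  unfolding L_def[abs_def]
  by (rule filterlim_tendsto_pos_mult_at_top[OF tendsto_const g_pos filterlim_compose[OF sqrt_at_top P_to_inf]])

lemma neglog:
  fixes t :: real assumes t: "0 < t" "t \<le> 1"
  shows "- ln t \<le> 4 * t powr (-1/4)" "1 \<le> t powr (-1/4)"
proof -
  have "ln (t powr (-1/4)) \<le> t powr (-1/4) - 1" using t by (intro ln_le_minus_one) simp
  then show "- ln t \<le> 4 * t powr (-1/4)" using t by (simp add: ln_powr)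
  have "t powr (1/4) \<le> 1" using t by (intro powr_le1) auto
  moreover have "t powr (1/4) > 0" using t by simp
  ultimately have "1 \<le> inverse (t powr (1/4))" by (simp add: one_le_inverse_iff)
  then show "1 \<le> t powr (-1/4)" using t by (simp add: powr_minus)
qed

lemma powr_to0:
  fixes q :: real assumes q: "q > 0"
  shows "((\<lambda>t. t powr q) \<longlongrightarrow> 0) (at_right 0)"
proof -
  have "filterlim (\<lambda>t. q * ln t) at_bot (at_right (0::real))"
    by (rule filterlim_tendsto_pos_mult_at_bot[OF tendsto_const q ln_at_0])
  then have "((\<lambda>t. exp (q * ln t)) \<longlongrightarrow> 0) (at_right (0::real))"
    by (rule filterlim_compose[OF exp_at_bot])
  moreover have ev: "\<forall>\<^sub>F t in at_right (0::real). exp (q * ln t) = t powr q"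
    using eventually_at_right_less[of "0::real"] by eventually_elim (simp add: powr_def)
  ultimately show ?thesis using tendsto_cong[OF ev] by simp
qed

lemma tlogt:
  fixes q :: real assumes q: "q \<ge> 1"
  shows "((\<lambda>t. t powr q * ln t) \<longlongrightarrow> 0) (at_right 0)"
proof (rule Lim_null_comparison)
  show "((\<lambda>t. 4 * t powr (q - 1/4)) \<longlongrightarrow> 0) (at_right 0)"
    using tendsto_mult_right_zero[OF powr_to0[of "q - 1/4"], of 4] q by simp
  have "\<forall>\<^sub>F t in at_right (0::real). 0 < t \<and> t < 1"
    by (simp add: eventually_at_right_field) (auto intro!: exI[of _ 1])
  then show "\<forall>\<^sub>F t in at_right 0. norm (t powr q * ln t) \<le> 4 * t powr (q - 1/4)"
  proof eventually_elim
    case (elim t)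
    have "norm (t powr q * ln t) = t powr q * (- ln t)" using elim by (simp add: abs_mult)
    also have "\<dots> \<le> t powr q * (4 * t powr (-1/4))" using neglog[of t] elim by (intro mult_left_mono) auto
    also have "\<dots> = 4 * t powr (q - 1/4)" using elim by (simp add: powr_add[symmetric])
    finally show ?case .
  qed
qed

lemma ln2_half: "ln (2::real) > 1/2"
proof -
  have "exp (1/2::real) * exp (1/2) = exp 1" by (simp add: exp_add[symmetric])
  also have "\<dots> < 4" using e_less_272 by simp
  finally have "exp (1/2::real) * exp (1/2) < 2 * 2" by simp
  then have "exp (1/2::real) < 2"
  proof (rule contrapos_pp)
    assume "\<not> exp (1/2::real) < 2"
    then have "2 \<le> exp (1/2::real)" by simp
    then have "2 * 2 \<le> exp (1/2::real) * exp (1/2)" by (intro mult_mono) auto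
    then show "\<not> exp (1/2::real) * exp (1/2) < 2 * 2" by simp
  qed
  then show ?thesis by (metis exp_less_cancel_iff exp_ln zero_less_numeral)
qed

lemma potter: "\<exists>w0>0. \<forall>w t. 0 < w \<and> w \<le> w0 \<and> 0 < t \<and> t \<le> 1 \<longrightarrow> L (t * w) - L w \<le> 1 + 2 * (- ln t)"
proof -
  have h: "(1/2::real) > 0" by simp
  have "\<forall>\<^sub>F w in at_right 0. dist (L (1/2 * w) - L w) (- ln (1/2)) < 1 - ln 2"
    using tendstoD[OF RV[OF h], of "1 - ln 2"] ln_2_less_1 by simp
  then obtain w0 where w0: "w0 > 0" "\<And>w. 0 < w \<Longrightarrow> w < w0 \<Longrightarrow> dist (L (1/2 * w) - L w) (- ln (1/2)) < 1 - ln 2"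
    unfolding eventually_at_right_field by auto
  define w1 where "w1 = w0 / 2"
  have w1: "w1 > 0" "w1 < w0" using w0 by (auto simp: w1_def)
  have half: "L (1/2 * w) \<le> L w + 1" if "0 < w" "w \<le> w1" for w
  proof -
    have "dist (L (1/2 * w) - L w) (- ln (1/2)) < 1 - ln 2" using w0(2)[of w] that w1 by simp
    then show ?thesis by (simp add: dist_real_def abs_less_iff ln_div)
  qed
  have ind: "L ((1/2)^n * w) \<le> L w + n" if "0 < w" "w \<le> w1" for n w
  proof (induction n)
    case 0 then show ?case by simp
  next
    case (Suc n)
    have pos: "0 < (1/2::real)^n * w" using that by simp
    have "(1/2::real)^n \<le> 1" by (simp add: power_le_one)
    then have ww: "(1/2::real)^n * w \<le> w" using that by (intro mult_left_le_one_le) auto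
    have le: "(1/2::real)^n * w \<le> w1" using ww that(2) by linarith
    have "L ((1/2)^Suc n * w) = L (1/2 * ((1/2)^n * w))" by (simp add: mult.assoc)
    also have "\<dots> \<le> L ((1/2)^n * w) + 1" by (rule half[OF pos le])
    finally show ?case using Suc.IH by simp
  qed
  show ?thesis
  proof (intro exI[of _ w1] conjI allI impI)
    show "w1 > 0" by (rule w1)
    fix w t :: real assume a: "0 < w \<and> w \<le> w1 \<and> 0 < t \<and> t \<le> 1"
    have ex: "\<exists>m. (1/2::real)^m < t" using a by (intro real_arch_pow_inv) auto
    define m where "m = (LEAST m. (1/2::real)^m < t)"
    have m1: "(1/2::real)^m < t" unfolding m_def using ex by (rule LeastI_ex)
    have m0: "m \<noteq> 0"
    proof
      assume "m = 0"
      then show False using m1 a by simp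
    qed
    then obtain k where k: "m = Suc k" by (cases m) auto
    have "k < m" using k by simp
    then have "\<not> (1/2::real)^k < t" unfolding m_def by (rule not_less_Least)
    then have tk: "t \<le> (1/2)^k" by simp
    have "ln t \<le> ln ((1/2::real)^k)" using tk a by simp
    also have "\<dots> = - (real k * ln 2)" by (simp add: ln_realpow ln_div)
    finally have kl: "real k * ln 2 \<le> - ln t" by simp
    have "real k \<le> 2 * (- ln t)"
    proof -
      have "real k * (1/2) \<le> real k * ln 2" using ln2_half by (intro mult_left_mono) auto
      then show ?thesis using kl by linarith
    qed
    have "L (t * w) \<le> L ((1/2)^m * w)" using a m1 by (intro L_anti) auto
    also have "\<dots> \<le> L w + m" using ind[of w m] a by simp
    finally show "L (t * w) - L w \<le> 1 + 2 * (- ln t)" using k \<open>real k \<le> 2 * (- ln t)\<close> by simp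
  qed
qed

definition "q0 p t = indicator {0..1} t * (p * t powr (p - 1) * (- ln t) / g)"
definition "domf p t = indicator {0..1} t * (p * ((9/g) + (9/g)^2) * t powr (-1/2))"

lemma hh_ident:
  assumes t: "0 < t" "t \<le> 1" and w: "w > 0" and Pw: "P w > 0"
  shows "hh p w t / (2 * sqrt (P w)) = p * t powr (p - 1) * ((L (t * w) - L w) / g + (L (t * w) - L w)^2 * inverse (L w) / (2 * g))"
proof -
  define s1 where "s1 = sqrt (P (w * t))"
  define s0 where "s0 = sqrt (P w)"
  have s0: "s0 > 0" using Pw by (simp add: s0_def)
  have P1: "P (w * t) = s1^2" using P_nonneg by (simp add: s1_def)
  have P0: "P w = s0^2" using P_nonneg by (simp add: s0_def)
  have L1: "L (t * w) = g * s1" by (simp add: L_def s1_def mult.commute)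
  have L0: "L w = g * s0" by (simp add: L_def s0_def)
  have "hh p w t / (2 * sqrt (P w)) = p * t powr (p - 1) * ((s1^2 - s0^2) / (2 * s0))"
    using t s0 by (simp add: hh_def P1 P0 s0_def[symmetric])
  also have "(s1^2 - s0^2) / (2 * s0) = (g * s1 - g * s0) / g + (g * s1 - g * s0)^2 * inverse (g * s0) / (2 * g)"
    using s0 g_pos by (simp add: field_simps power2_eq_square)
  finally show ?thesis by (simp add: L1 L0)
qed

lemma hh_lim: "((\<lambda>w. hh p w t / (2 * sqrt (P w))) \<longlongrightarrow> q0 p t) (at_right 0)"
proof (cases "0 < t \<and> t \<le> 1")
  case True
  have ev: "\<forall>\<^sub>F w in at_right 0. p * t powr (p - 1) * ((L (t * w) - L w) / g + (L (t * w) - L w)^2 * inverse (L w) / (2 * g))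
       = hh p w t / (2 * sqrt (P w))"
  proof -
    have "\<forall>\<^sub>F w in at_right 0. 1 \<le> P w" using P_to_inf by (simp add: filterlim_at_top)
    then show ?thesis using eventually_at_right_less[of "0::real"]
      by eventually_elim (subst hh_ident, use True in auto)
  qed
  have "((\<lambda>w. p * t powr (p - 1) * ((L (t * w) - L w) / g + (L (t * w) - L w)^2 * inverse (L w) / (2 * g)))
      \<longlongrightarrow> p * t powr (p - 1) * ((- ln t) / g + (- ln t)^2 * 0 / (2 * g))) (at_right 0)"
    using True g_pos by (intro tendsto_intros RV tendsto_inverse_0_at_top[OF L_top]) auto
  then have "((\<lambda>w. p * t powr (p - 1) * ((L (t * w) - L w) / g + (L (t * w) - L w)^2 * inverse (L w) / (2 * g)))
      \<longlongrightarrow> q0 p t) (at_right 0)" using True g_pos by (simp add: q0_def)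
  then show ?thesis using tendsto_cong[OF ev] by simp
next
  case False
  then have "t \<notin> {0..1} \<or> t = 0" by auto
  then have "\<And>w. hh p w t = 0" "q0 p t = 0" by (auto simp: hh_def q0_def)
  then show ?thesis by simp
qed

lemma domf_nonneg: "p \<ge> 1 \<Longrightarrow> domf p t \<ge> 0"
  using g_pos by (simp add: domf_def)

lemma hh_bound:
  assumes p: "p \<ge> 1"
  shows "\<exists>w0>0. \<forall>w t. 0 < w \<and> w \<le> w0 \<longrightarrow> \<bar>hh p w t / (2 * sqrt (P w))\<bar> \<le> domf p t"
proof -
  obtain w1 where w1: "w1 > 0" "\<And>w t. 0 < w \<and> w \<le> w1 \<and> 0 < t \<and> t \<le> 1 \<Longrightarrow> L (t * w) - L w \<le> 1 + 2 * (- ln t)"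
    using potter by blast
  have "\<forall>\<^sub>F w in at_right 0. 1 \<le> P w" using P_to_inf by (simp add: filterlim_at_top)
  then obtain w2 where w2: "w2 > 0" "\<And>y. 0 < y \<Longrightarrow> y < w2 \<Longrightarrow> 1 \<le> P y"
    unfolding eventually_at_right_field by auto
  define K where "K = 9 / g"
  have K: "K > 0" using g_pos by (simp add: K_def)
  show ?thesis
  proof (intro exI[of _ "min w1 (w2/2)"] conjI allI impI)
    show "min w1 (w2/2) > 0" using w1 w2 by simp
    fix w t assume wa: "0 < w \<and> w \<le> min w1 (w2/2)"
    show "\<bar>hh p w t / (2 * sqrt (P w))\<bar> \<le> domf p t"
    proof (cases "0 < t \<and> t \<le> 1")
      case False
      then have "t \<notin> {0..1} \<or> t = 0" by auto
      then have "hh p w t = 0" by (auto simp: hh_def)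
      then show ?thesis using domf_nonneg[OF p] by simp
    next
      case True
      have Pw: "1 \<le> P w" using w2(2)[of w] wa w2 by simp
      have Lw: "L w \<ge> g" using Pw g_pos by (simp add: L_def)
      define D where "D = L (t * w) - L w"
      define E where "E = D / g"
      define x where "x = t powr (-1/4)"
      have D0: "0 \<le> D" unfolding D_def using True wa by (intro diff_ge_0_iff_ge[THEN iffD2] L_anti)
        (auto simp: mult_le_cancel_right1)
      have D1: "D \<le> 1 + 2 * (- ln t)" unfolding D_def using w1(2)[of w t] wa True by simp
      have x1: "1 \<le> x" "- ln t \<le> 4 * x" using neglog[of t] True by (auto simp: x_def)
      have D2: "D \<le> 9 * x" using D1 x1 by linarith
      have E0: "0 \<le> E" using D0 g_pos by (simp add: E_def)
      have E1: "E \<le> K * x" using D2 g_pos by (simp add: E_def K_def divide_right_mono)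
      have invL: "inverse (L w) \<le> 1 / g" using Lw g_pos by (simp add: inverse_eq_divide frac_le)
      have t2: "D^2 * inverse (L w) / (2 * g) \<le> E^2"
      proof -
        have "D^2 * inverse (L w) / (2 * g) \<le> D^2 * (1 / g) / (2 * g)"
          using invL g_pos by (intro divide_right_mono mult_left_mono) auto
        also have "\<dots> \<le> E^2" using g_pos by (simp add: E_def power2_eq_square field_simps)
        finally show ?thesis .
      qed
      have term0: "0 \<le> D / g + D^2 * inverse (L w) / (2 * g)" using D0 g_pos Lw by simp
      have term1: "D / g + D^2 * inverse (L w) / (2 * g) \<le> (K + K^2) * x^2"
      proof -
        have "E^2 \<le> (K * x)^2" using E0 E1 by (intro power_mono) auto
        moreover have "K * x \<le> K * x^2" using x1 K by (intro mult_left_mono) (auto simp: power2_eq_square)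
        ultimately show ?thesis using t2 E1 by (simp add: E_def[symmetric] algebra_simps power_mult_distrib)
      qed
      have x2: "x^2 = t powr (-1/2)" using True by (simp add: x_def power2_eq_square powr_add[symmetric])
      have tp: "t powr (p - 1) \<le> 1" "0 \<le> t powr (p - 1)" using True p by (auto intro: powr_le1)
      have eq: "hh p w t / (2 * sqrt (P w)) = p * t powr (p - 1) * (D / g + D^2 * inverse (L w) / (2 * g))"
        unfolding D_def using True wa Pw by (intro hh_ident) auto
      have nn: "0 \<le> p * t powr (p - 1) * (D / g + D^2 * inverse (L w) / (2 * g))"
        using term0 tp p by simp
      have "p * t powr (p - 1) * (D / g + D^2 * inverse (L w) / (2 * g)) \<le> p * 1 * ((K + K^2) * x^2)"
        using tp term0 term1 p by (intro mult_mono) auto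
      also have "\<dots> = domf p t" using True by (simp add: domf_def K_def x2)
      finally show ?thesis using eq nn by simp
    qed
  qed
qed

lemma domf_int: assumes p: "p \<ge> 1" shows "integrable lborel (domf p)"
proof (rule integrableI_nonneg)
  show "domf p \<in> borel_measurable lborel" unfolding domf_def by measurable
  show "AE x in lborel. 0 \<le> domf p x" using domf_nonneg[OF p] by simp
  define C where "C = p * ((9/g) + (9/g)^2)"
  have "((\<lambda>x. x powr (-1/2)) has_integral (1 powr (-1/2 + 1) / (-1/2 + 1))) {0..1::real}"
    by (intro has_integral_powr_from_0) auto
  then have "((\<lambda>x. C * x powr (-1/2)) has_integral C * 2) {0..1::real}"
    using has_integral_mult_right[of "\<lambda>x. x powr (-1/2)" _ "{0..1::real}" C] by simp
  moreover have "C \<ge> 0" using p g_pos by (simp add: C_def)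
  ultimately have "(\<integral>\<^sup>+ x. ennreal (C * x powr (-1/2)) * indicator {0..1} x \<partial>lborel) = ennreal (C * 2)"
    by (intro nn_integral_has_integral_lebesgue') auto
  moreover have "(\<integral>\<^sup>+ x. ennreal (domf p x) \<partial>lborel) = (\<integral>\<^sup>+ x. ennreal (C * x powr (-1/2)) * indicator {0..1} x \<partial>lborel)"
    by (intro nn_integral_cong) (simp add: domf_def C_def indicator_def)
  ultimately show "(\<integral>\<^sup>+ x. ennreal (domf p x) \<partial>lborel) < \<infinity>" by simp
qed

lemma q0_int:
  assumes p: "p \<ge> 1"
  shows "(LINT t|lborel. q0 p t) = 1 / (p * g)"
proof -
  define F where "F t = t powr p * (1/p - ln t) / g" for t :: real
  define f where "f t = p * t powr (p - 1) * (- ln t) / g" for t :: real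
  have der: "(F has_vector_derivative f x) (at x)" if x: "x \<in> {0<..<1}" for x
  proof -
    have x0: "x > 0" using x by simp
    have d1: "((\<lambda>t. t powr p) has_real_derivative p * x powr (p - 1)) (at x)"
      by (rule has_real_derivative_powr[OF x0])
    have d2: "((\<lambda>t. 1/p - ln t) has_real_derivative 0 - inverse x) (at x)"
      by (intro DERIV_diff DERIV_const DERIV_ln x0)
    have "((\<lambda>t. t powr p * (1/p - ln t) / g) has_real_derivative
        (p * x powr (p - 1) * (1/p - ln x) + (0 - inverse x) * x powr p) / g) (at x)"
      by (intro DERIV_cdivide DERIV_mult d1 d2)
    moreover have "(p * x powr (p - 1) * (1/p - ln x) + (0 - inverse x) * x powr p) / g = f x"
    proof -
      have "x powr p * inverse x = x powr (p - 1)" using x0 by (simp add: powr_diff inverse_eq_divide)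
      then show ?thesis using p by (simp add: f_def algebra_simps)
    qed
    ultimately have "(F has_real_derivative f x) (at x)" unfolding F_def by simp
    then show ?thesis by (simp add: has_real_derivative_iff_has_vector_derivative)
  qed
  have isc: "isCont F x" if "x > 0" for x
    using that g_pos unfolding F_def by (intro continuous_intros) auto
  have cont: "continuous_on {0..1} F"
  proof (rule continuous_on_IccI)
    have "((\<lambda>t. (t powr p / p - t powr p * ln t) / g) \<longlongrightarrow> (0 / p - 0) / g) (at_right 0)"
      using p g_pos by (intro tendsto_intros powr_to0 tlogt) auto
    moreover have Feq: "F = (\<lambda>t. (t powr p / p - t powr p * ln t) / g)"
      by (rule ext) (simp add: F_def right_diff_distrib)
    ultimately show "(F \<longlongrightarrow> F 0) (at_right 0)" unfolding Feq by simp
    have "(F \<longlongrightarrow> F 1) (at 1)" using isc[of 1] by (simp add: isCont_def)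
    then show "(F \<longlongrightarrow> F 1) (at_left 1)" by (rule tendsto_mono[OF at_le[OF subset_UNIV]])
    show "\<And>x. 0 < x \<Longrightarrow> x < 1 \<Longrightarrow> (F \<longlongrightarrow> F x) (at x)" using isc by (simp add: isCont_def)
  qed simp
  have hi: "(f has_integral (F 1 - F 0)) {0..1}"
    by (rule fundamental_theorem_of_calculus_interior[OF _ cont der]) auto
  have F10: "F 1 - F 0 = 1 / (p * g)" by (simp add: F_def)
  have nn: "0 \<le> f x" if "x \<in> {0..1}" for x
  proof (cases "x = 0")
    case False
    then have "ln x \<le> 0" using that by simp
    moreover have "0 \<le> p * x powr (p - 1)" using p by simp
    ultimately have "0 \<le> p * x powr (p - 1) * (- ln x)" by (metis mult_nonneg_nonneg neg_0_le_iff_le)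
    then show ?thesis using g_pos unfolding f_def by (rule divide_nonneg_pos)
  qed (simp add: f_def)
  have nni: "(\<integral>\<^sup>+ x. ennreal (f x) * indicator {0..1} x \<partial>lborel) = ennreal (1 / (p * g))"
    using nn_integral_has_integral_lebesgue'[OF nn hi] F10 by simp
  have "(LINT t|lborel. q0 p t) = enn2real (\<integral>\<^sup>+ t. ennreal (q0 p t) \<partial>lborel)"
    by (intro integral_eq_nn_integral) (auto simp: q0_def[abs_def] intro!: AE_I2, use nn in \<open>auto simp: f_def indicator_def\<close>)
  also have "(\<integral>\<^sup>+ t. ennreal (q0 p t) \<partial>lborel) = (\<integral>\<^sup>+ x. ennreal (f x) * indicator {0..1} x \<partial>lborel)"
    by (intro nn_integral_cong) (simp add: q0_def f_def indicator_def)
  finally show ?thesis using nni p g_pos by simp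
qed

lemma ratio_lim:
  assumes p: "p \<ge> 1"
  shows "((\<lambda>w. (LINT t|lborel. hh p w t) / (2 * sqrt (P w))) \<longlongrightarrow> 1 / (p * g)) (at_right 0)"
proof -
  obtain w0 where w0: "w0 > 0" "\<And>w t. 0 < w \<and> w \<le> w0 \<Longrightarrow> \<bar>hh p w t / (2 * sqrt (P w))\<bar> \<le> domf p t"
    using hh_bound[OF p] by blast
  have "((\<lambda>T. LINT t|lborel. hh p (inverse T) t / (2 * sqrt (P (inverse T)))) \<longlongrightarrow> LINT t|lborel. q0 p t) at_top"
  proof (rule integral_dominated_convergence_at_top[where w = "domf p"])
    show "q0 p \<in> borel_measurable lborel" unfolding q0_def by measurable
    show "\<And>T. (\<lambda>t. hh p (inverse T) t / (2 * sqrt (P (inverse T)))) \<in> borel_measurable lborel" by measurable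
    show "integrable lborel (domf p)" by (rule domf_int[OF p])
    show "AE t in lborel. ((\<lambda>T. hh p (inverse T) t / (2 * sqrt (P (inverse T)))) \<longlongrightarrow> q0 p t) at_top"
    proof (intro AE_I2)
      fix t
      have "((\<lambda>w. hh p w t / (2 * sqrt (P w))) \<longlongrightarrow> q0 p t) (at_right 0)" by (rule hh_lim)
      then show "((\<lambda>T. hh p (inverse T) t / (2 * sqrt (P (inverse T)))) \<longlongrightarrow> q0 p t) at_top"
        by (subst (asm) filterlim_at_right_to_top) simp
    qed
    show "\<forall>\<^sub>F T in at_top. AE t in lborel. norm (hh p (inverse T) t / (2 * sqrt (P (inverse T)))) \<le> domf p t"
      using eventually_ge_at_top[of "inverse w0"]
    proof eventually_elim
      case (elim T)
      have T0: "T > 0" using elim w0 by (meson inverse_positive_iff_positive less_le_trans)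
      have "inverse T \<le> inverse (inverse w0)" using w0 by (intro le_imp_inverse_le[OF elim]) simp
      then have "inverse T \<le> w0" by simp
      then show ?case using w0(2)[of "inverse T"] T0 by simp
    qed
  qed
  then have "((\<lambda>T. (LINT t|lborel. hh p (inverse T) t) / (2 * sqrt (P (inverse T)))) \<longlongrightarrow> 1 / (p * g)) at_top"
    using q0_int[OF p] by simp
  then show ?thesis by (simp add: filterlim_at_right_to_top)
qed

lemma I_asymp:
  assumes p: "p \<ge> 1"
  shows "(\<lambda>w. LINT u:{0..w}|M. u powr p) \<sim>[at_right 0] (\<lambda>w. 2 / (p * g) * w powr p * sqrt (P w))"
proof (rule asymp_equivI')
  have "((\<lambda>w. ((LINT t|lborel. hh p w t) / (2 * sqrt (P w))) * (p * g)) \<longlongrightarrow> 1 / (p * g) * (p * g)) (at_right 0)"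
    by (intro tendsto_intros ratio_lim p)
  then have lim: "((\<lambda>w. ((LINT t|lborel. hh p w t) / (2 * sqrt (P w))) * (p * g)) \<longlongrightarrow> 1) (at_right 0)"
    using p g_pos by simp
  have ev: "\<forall>\<^sub>F w in at_right 0. ((LINT t|lborel. hh p w t) / (2 * sqrt (P w))) * (p * g) =
      (LINT u:{0..w}|M. u powr p) / (2 / (p * g) * w powr p * sqrt (P w))"
  proof -
    have "\<forall>\<^sub>F w in at_right 0. 1 \<le> P w" using P_to_inf by (simp add: filterlim_at_top)
    then show ?thesis using eventually_at_right_less[of "0::real"]
    proof eventually_elim
      case (elim w)
      have "sqrt (P w) > 0" using elim by simp
      then show ?case using elim p g_pos by (simp add: int_formula field_simps)
    qed
  qed
  show "((\<lambda>w. (LINT u:{0..w}|M. u powr p) / (2 / (p * g) * w powr p * sqrt (P w))) \<longlongrightarrow> 1) (at_right 0)"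
    using lim tendsto_cong[OF ev] by simp
qed

lemma binv_lim: "filterlim (Pibar_inv M) (at_right 0) at_top"
  unfolding filterlim_at
proof
  show "\<forall>\<^sub>F r in at_top. Pibar_inv M r \<in> {0<..} \<and> Pibar_inv M r \<noteq> 0"
    using eventually_ge_at_top[of "P 1"]
  proof eventually_elim
    case (elim r) then show ?case using inv_props(1)[OF elim] by simp
  qed
  show "(Pibar_inv M \<longlongrightarrow> 0) at_top"
  proof (rule tendstoI)
    fix e :: real assume e: "e > 0"
    show "\<forall>\<^sub>F r in at_top. dist (Pibar_inv M r) 0 < e"
      using eventually_ge_at_top[of "max (P 1) (P (e/2))"]
    proof eventually_elim
      case (elim r)
      have pos: "Pibar_inv M r > 0" using inv_props(1)[of r] elim by simp
      have "Pibar_inv M r \<le> e/2" unfolding Pibar_inv_def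
        using elim e by (intro cInf_lower) (auto simp: bdd_below_def intro!: exI[of _ 0])
      then show ?case using pos e by simp
    qed
  qed
qed

lemma abs_gamma: "\<bar>\<gamma>\<bar> = g" using \<gamma>_neg by (simp add: g_def)

lemma ev_big: "\<forall>\<^sub>F w in at_right 0. 0 < w \<and> 1 \<le> P w"
proof -
  have "\<forall>\<^sub>F w in at_right 0. 1 \<le> P w" using P_to_inf by (simp add: filterlim_at_top)
  then show ?thesis using eventually_at_right_less[of "0::real"] by eventually_elim simp
qed

lemma part1:
  assumes p: "p \<ge> 1"
  shows "(\<lambda>r. LINT u:{0..Pibar_inv M r}|M. u powr p) \<sim>[at_top] (\<lambda>r. 2 / (p * \<bar>\<gamma>\<bar>) * Pibar_inv M r powr p * sqrt r)"
proof -
  have "(\<lambda>r. LINT u:{0..Pibar_inv M r}|M. u powr p) \<sim>[at_top]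
      (\<lambda>r. 2 / (p * g) * Pibar_inv M r powr p * sqrt (P (Pibar_inv M r)))"
    by (rule asymp_equiv_compose'[OF I_asymp[OF p] binv_lim])
  then show ?thesis
  proof (rule asymp_equiv_transfer)
    show "\<forall>\<^sub>F r in at_top. 2 / (p * g) * Pibar_inv M r powr p * sqrt (P (Pibar_inv M r)) =
        2 / (p * \<bar>\<gamma>\<bar>) * Pibar_inv M r powr p * sqrt r"
      using eventually_ge_at_top[of "P 1"]
    proof eventually_elim
      case (elim r) then show ?case using inv_props(2)[OF elim] by (simp add: abs_gamma)
    qed
  qed simp
qed

lemma sig_eq: "sigma2 M w = (LINT u:{0..w}|M. u powr 2)"
  unfolding sigma2_def by (intro set_lebesgue_integral_cong) auto

lemma sig_asymp: "sigma2 M \<sim>[at_right 0] (\<lambda>w. 1 / g * w^2 * sqrt (P w))"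
proof -
  have "(\<lambda>w. LINT u:{0..w}|M. u powr 2) \<sim>[at_right 0] (\<lambda>w. 2 / (2 * g) * w powr 2 * sqrt (P w))"
    by (rule I_asymp) simp
  then show ?thesis
  proof (rule asymp_equiv_transfer)
    show "\<forall>\<^sub>F w in at_right 0. (LINT u:{0..w}|M. u powr 2) = sigma2 M w" by (simp add: sig_eq)
    show "\<forall>\<^sub>F w in at_right 0. 2 / (2 * g) * w powr 2 * sqrt (P w) = 1 / g * w^2 * sqrt (P w)"
      using eventually_at_right_less[of "0::real"] by eventually_elim simp
  qed
qed

lemma part2: "(\<lambda>r. sigma2 M (Pibar_inv M r)) \<sim>[at_top] (\<lambda>r. 1 / \<bar>\<gamma>\<bar> * (Pibar_inv M r)\<^sup>2 * sqrt r)"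
proof -
  have "(\<lambda>r. sigma2 M (Pibar_inv M r)) \<sim>[at_top] (\<lambda>r. 1 / g * (Pibar_inv M r)^2 * sqrt (P (Pibar_inv M r)))"
    by (rule asymp_equiv_compose'[OF sig_asymp binv_lim])
  then show ?thesis
  proof (rule asymp_equiv_transfer)
    show "\<forall>\<^sub>F r in at_top. 1 / g * (Pibar_inv M r)^2 * sqrt (P (Pibar_inv M r)) = 1 / \<bar>\<gamma>\<bar> * (Pibar_inv M r)\<^sup>2 * sqrt r"
      using eventually_ge_at_top[of "P 1"]
    proof eventually_elim
      case (elim r) then show ?case using inv_props(2)[OF elim] by (simp add: abs_gamma)
    qed
  qed simp
qed

lemma P_L: "P y = (L y / g)^2"
  using g_pos P_nonneg[of y] by (simp add: L_def)

lemma slow_lim: assumes l: "l > 0" shows "((\<lambda>x. P (l * x) / P x) \<longlongrightarrow> 1) (at_right 0)"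
proof -
  have "((\<lambda>x. (1 + (L (l * x) - L x) * inverse (L x))^2) \<longlongrightarrow> (1 + (- ln l) * 0)^2) (at_right 0)"
    by (intro tendsto_intros RV l tendsto_inverse_0_at_top[OF L_top])
  then have lim: "((\<lambda>x. (1 + (L (l * x) - L x) * inverse (L x))^2) \<longlongrightarrow> 1) (at_right 0)" by simp
  have "\<forall>\<^sub>F x in at_right 0. (1 + (L (l * x) - L x) * inverse (L x))^2 = P (l * x) / P x"
    using ev_big
  proof eventually_elim
    case (elim x)
    have Lx: "L x > 0" using elim g_pos by (simp add: L_def)
    have "1 + (L (l * x) - L x) * inverse (L x) = L (l * x) / L x" using Lx by (simp add: field_simps)
    then show ?case using Lx g_pos by (simp add: P_L power_divide)
  qed
  then show ?thesis using lim tendsto_cong by fastforce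
qed

lemma part3: "slowvar_at_0 P"
  unfolding slowvar_at_0_def regvar_at_0_def
proof (intro conjI allI impI)
  show "\<forall>\<^sub>F x in at_right 0. P x > 0" using ev_big by eventually_elim simp
  fix l :: real assume l: "l > 0"
  show "((\<lambda>x. P (l * x) / P x) \<longlongrightarrow> l powr 0) (at_right 0)" using slow_lim[OF l] l by simp
qed

lemma part4: "regvar_at_0 (sigma2 M) 2"
  unfolding regvar_at_0_def
proof (intro conjI allI impI)
  have sg: "\<forall>\<^sub>F w in at_right 0. sgn (sigma2 M w) = sgn (1 / g * w^2 * sqrt (P w))"
    by (rule asymp_equiv_imp_eventually_same_sign[OF sig_asymp])
  show "\<forall>\<^sub>F x in at_right 0. sigma2 M x > 0"
    using sg ev_big
  proof eventually_elim
    case (elim w)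
    then have "1 / g * w^2 * sqrt (P w) > 0" using g_pos by simp
    then show ?case using elim(1) by (metis sgn_greater sgn_pos)
  qed
  fix l :: real assume l: "l > 0"
  have c: "filterlim (\<lambda>w. l * w) (at_right 0) (at_right 0)"
    unfolding filterlim_at
  proof
    show "\<forall>\<^sub>F w in at_right 0. l * w \<in> {0<..} \<and> l * w \<noteq> 0"
      using eventually_at_right_less[of "0::real"] by eventually_elim (use l in simp)
    have "((\<lambda>w. l * w) \<longlongrightarrow> l * 0) (at_right (0::real))" by (intro tendsto_intros)
    then show "((\<lambda>w. l * w) \<longlongrightarrow> 0) (at_right 0)" by simp
  qed
  have A: "(\<lambda>w. sigma2 M (l * w) / sigma2 M w) \<sim>[at_right 0]
      (\<lambda>w. (1 / g * (l * w)^2 * sqrt (P (l * w))) / (1 / g * w^2 * sqrt (P w)))"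
    by (intro asymp_equiv_divide asymp_equiv_compose'[OF sig_asymp c] sig_asymp)
  have "((\<lambda>w. l^2 * sqrt (P (l * w) / P w)) \<longlongrightarrow> l^2 * sqrt 1) (at_right 0)"
    by (intro tendsto_intros slow_lim l)
  moreover have "\<forall>\<^sub>F w in at_right 0. l^2 * sqrt (P (l * w) / P w) =
      (1 / g * (l * w)^2 * sqrt (P (l * w))) / (1 / g * w^2 * sqrt (P w))"
    using ev_big
  proof eventually_elim
    case (elim w)
    have "sqrt (P w) > 0" using elim by simp
    then show ?case using elim g_pos by (simp add: real_sqrt_divide field_simps power_mult_distrib)
  qed
  ultimately have "((\<lambda>w. (1 / g * (l * w)^2 * sqrt (P (l * w))) / (1 / g * w^2 * sqrt (P w))) \<longlongrightarrow> l^2) (at_right 0)"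
    using tendsto_cong by fastforce
  then have "((\<lambda>w. sigma2 M (l * w) / sigma2 M w) \<longlongrightarrow> l^2) (at_right 0)"
    by (rule asymp_equiv_tendsto_transfer[OF asymp_equiv_symI[OF A]])
  then show "((\<lambda>x. sigma2 M (l * x) / sigma2 M x) \<longlongrightarrow> l powr 2) (at_right 0)" using l by simp
qed

lemma part5: "regvar_at_0 (\<lambda>x. exp (- sqrt (P x))) (1 / \<bar>\<gamma>\<bar>)"
  unfolding regvar_at_0_def
proof (intro conjI allI impI)
  show "\<forall>\<^sub>F x in at_right 0. exp (- sqrt (P x)) > 0" by simp
  fix l :: real assume l: "l > 0"
  have "((\<lambda>x. exp (- (L (l * x) - L x) / g)) \<longlongrightarrow> exp (- (- ln l) / g)) (at_right 0)"
    by (intro tendsto_intros RV l) (use g_pos in simp)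
  moreover have "exp (- (- ln l) / g) = l powr (1 / \<bar>\<gamma>\<bar>)" using l by (simp add: abs_gamma powr_def)
  moreover have "\<And>x. exp (- (L (l * x) - L x) / g) = exp (- sqrt (P (l * x))) / exp (- sqrt (P x))"
    using g_pos by (simp add: L_def exp_diff[symmetric] field_simps)
  ultimately show "((\<lambda>x. exp (- sqrt (P (l * x))) / exp (- sqrt (P x))) \<longlongrightarrow> l powr (1 / \<bar>\<gamma>\<bar>)) (at_right 0)"
    by simp
qed

end

theorem proposition4p1:
  fixes M :: "real measure" and a b :: "real \<Rightarrow> real" and \<gamma> :: real
  assumes levy: "subordinator_levy_measure M"
    and inf: "infinite_measure M"
    and atoml: "atomless M"
    and a_pos: "\<And>r. a r > 0"
    and \<gamma>_neg: "\<gamma> < 0"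
    and conv: "\<And>x. 1 - \<gamma> * x > 0 \<Longrightarrow>
        (\<forall>\<^sub>F r in at_top. a r * x + b r > 0) \<and>
        ((\<lambda>r. (r - Pibar M (a r * x + b r)) / sqrt r)
           \<longlongrightarrow> - (2 / \<gamma>) * ln (1 - \<gamma> * x)) at_top"
  shows "(\<forall>p::real. p \<ge> 1 \<longrightarrow>
            (\<lambda>r. LINT u:{0..Pibar_inv M r}|M. u powr p)
              \<sim>[at_top] (\<lambda>r. 2 / (p * \<bar>\<gamma>\<bar>) * Pibar_inv M r powr p * sqrt r))
       \<and> (\<lambda>r. sigma2 M (Pibar_inv M r))
              \<sim>[at_top] (\<lambda>r. 1 / \<bar>\<gamma>\<bar> * (Pibar_inv M r)\<^sup>2 * sqrt r)
       \<and> slowvar_at_0 (Pibar M)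
       \<and> regvar_at_0 (sigma2 M) 2
       \<and> regvar_at_0 (\<lambda>x. exp (- sqrt (Pibar M x))) (1 / \<bar>\<gamma>\<bar>)"
proof -
  interpret PS M a b \<gamma>
    using levy inf atoml a_pos \<gamma>_neg conv by unfold_locales auto
  show ?thesis using part1 part2 part3 part4 part5 by blast
qed

end
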